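(* Consider the deep linear ResNet setting described in the context, and assume that for every $N\ge1$ and every $n\in\{1,\dots,N\}$ one has $\sqrt{\ell^N(0)}<\frac{m}{4\sqrt{2Me^3}}$ and $\|\theta_n^N(0)\|\le\frac14$. Suppose moreover that there exists $C_0>0$ independent of $n$ and $N$ such that $\|\theta_{n+1}^N(0)-\theta_n^N(0)\|\le\frac{C_0}{N}$ for all $N$ and $n\in\{1,\dots,N-1\}$. Then for all $N$, $n$ and all $t\ge0$, $\|\theta_n^N(t)\|<\frac12$, and $\theta_n^N(t)$ admits a limit as $t\to+\infty$. Moreover, there exists $C>0$ such that for all $N$, all $n\in\{1,\dots,N-1\}$ and all $t\ge0$, $\|\theta_{n+1}^N(t)-\theta_n^N(t)\|\le\frac CN$.
   Context: Let $d\ge1$, $\Sigma\in\mathbb{R}^{d\times d}$ symmetric positive definite with largest eigenvalue $M>0$ and smallest eigenvalue $m>0$, and $B\in\mathbb{R}^{d\times d}$. For $A\in\mathbb{R}^{d\times d}$ put $\|A\|_\Sigma^2=\mathrm{Tr}(A\Sigma A^\top)$. For each integer $N\ge1$ and parameters $\theta_1^N,\dots,\theta_N^N\in\mathbb{R}^{d\times d}$, let $\Pi^N=(I_d+\frac{\theta_N^N}{N})\cdots(I_d+\frac{\theta_1^N}{N})$ and $L(\theta_1^N,\dots,\theta_N^N)=\|\Pi^N-B\|_\Sigma^2$. The parameters evolve by the rescaled gradient flow $\frac{d\theta_n^N}{dt}(t)=-N\nabla_{\theta_n^N}L(\theta_1^N(t),\dots,\theta_N^N(t))$ for $t\ge0$,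 $n=1,\dots,N$, and $\ell^N(t)=L(\theta_1^N(t),\dots,\theta_N^N(t))$. $\|\cdot\|$ denotes the spectral (operator) norm of matrices. *)

theory Defs
  imports "HOL-Analysis.Analysis"
begin

type_synonym 'd mat = "real^'d^'d"

definition specnorm :: "'d::finite mat \<Rightarrow> real" where
  "specnorm A = onorm (\<lambda>x. A *v x)"

definition is_eigenvalue :: "'d::finite mat \<Rightarrow> real \<Rightarrow> bool" where
  "is_eigenvalue A lam \<longleftrightarrow> (\<exists>v. v \<noteq> 0 \<and> A *v v = lam *\<^sub>R v)"

definition sig_norm2 :: "'d::finite mat \<Rightarrow> 'd mat \<Rightarrow> real" where
  "sig_norm2 Sig A = trace (A ** Sig ** transpose A)"

text \<open>resprod N th k = (I + th k / N) ... (I + th 1 / N); Pi^N = resprod N th N.\<close>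
fun resprod :: "nat \<Rightarrow> (nat \<Rightarrow> 'd::finite mat) \<Rightarrow> nat \<Rightarrow> 'd mat" where
  "resprod N th 0 = mat 1"
| "resprod N th (Suc k) = (mat 1 + (1 / real N) *\<^sub>R th (Suc k)) ** resprod N th k"

definition lossL :: "'d::finite mat \<Rightarrow> 'd mat \<Rightarrow> nat \<Rightarrow> (nat \<Rightarrow> 'd mat) \<Rightarrow> real" where
  "lossL Sig B N th = sig_norm2 Sig (resprod N th N - B)"

definition is_gradient :: "('d::finite mat \<Rightarrow> real) \<Rightarrow> 'd mat \<Rightarrow> 'd mat \<Rightarrow> bool" where
  "is_gradient f x g \<longleftrightarrow> (f has_derivative (\<lambda>h. g \<bullet> h)) (at x)"

end

theory Submission
  imports Defs
begin
lemma inner_mat: "(A::real^'n::finite^'m::finite) \<bullet> B = (\<Sum>i\<in>UNIV. \<Sum>j\<in>UNIV. A$i$j * B$i$j)"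
  by (simp add: inner_vec_def)

lemma norm_mat_sq: "(norm (A::real^'n::finite^'m::finite))^2 = (\<Sum>i\<in>UNIV. \<Sum>j\<in>UNIV. (A$i$j)^2)"
  by (simp only: power2_norm_eq_inner inner_mat) (simp add: power2_eq_square)

lemma norm_mat_sq_rows: "(norm (A::real^'n::finite^'m::finite))^2 = (\<Sum>i\<in>UNIV. (norm (A$i))^2)"
  by (simp only: norm_mat_sq power2_norm_eq_inner inner_vec_def) (simp add: power2_eq_square)

lemma trace_quad: "trace (Y ** S ** transpose Y) = (Y::real^'n::finite^'n) \<bullet> (Y ** S)"
  by (simp add: trace_def inner_mat matrix_matrix_mult_def transpose_def sum_distrib_right mult.commute)

lemma sum_rot3: "(\<Sum>i\<in>(UNIV::'a::finite set). \<Sum>j\<in>(UNIV::'b::finite set). \<Sum>k\<in>(UNIV::'c::finite set). f i j k) = (\<Sum>j\<in>UNIV. \<Sum>k\<in>UNIV. \<Sum>i\<in>UNIV. (f i j k::real))"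
  apply (rule trans[OF sum.swap]) 
  apply (rule sum.cong[OF refl])
  apply (rule sum.swap)
  done

lemma adj_left: "(P::real^'n::finite^'n) \<bullet> (A ** Z) = (transpose A ** P) \<bullet> Z"
proof -
  have "P \<bullet> (A ** Z) = (\<Sum>i\<in>UNIV. \<Sum>j\<in>UNIV. \<Sum>k\<in>UNIV. P$i$k * (A$i$j * Z$j$k))"
    by (simp add: inner_mat matrix_matrix_mult_def sum_distrib_left, subst sum.swap, simp)
  also have "\<dots> = (\<Sum>j\<in>UNIV. \<Sum>k\<in>UNIV. \<Sum>i\<in>UNIV. P$i$k * (A$i$j * Z$j$k))"
    by (rule sum_rot3)
  also have "\<dots> = (transpose A ** P) \<bullet> Z"
    by (simp add: inner_mat matrix_matrix_mult_def transpose_def sum_distrib_right sum_distrib_left mult_ac)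
  finally show ?thesis .
qed

lemma adj_right: "(P::real^'n::finite^'n) \<bullet> (Z ** C) = (P ** transpose C) \<bullet> Z"
  apply (simp add: inner_mat matrix_matrix_mult_def transpose_def sum_distrib_left sum_distrib_right)
  apply (rule sum.cong, simp)
  apply (subst sum.swap) apply (simp add: mult_ac)
  done

lemma norm_transpose: "norm (transpose (A::real^'n::finite^'n)) = norm A"
proof -
  have "(norm (transpose A))^2 = (norm A)^2"
    unfolding norm_mat_sq transpose_def by (simp, subst sum.swap, simp)
  then show ?thesis by (simp add: power2_eq_iff_nonneg)
qed

lemma norm_vec_sq: "(norm (x::real^'n::finite))^2 = (\<Sum>i\<in>UNIV. (x$i)^2)"
  by (simp only: power2_norm_eq_inner inner_vec_def) (simp add: power2_eq_square)

lemma mv_row: "(A *v v) $ i = (A $ i) \<bullet> (v::real^'n::finite)"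
  by (simp add: matrix_vector_mult_def inner_vec_def)

lemma mv_norm_le: "norm ((A::real^'n::finite^'m::finite) *v v) \<le> norm A * norm v"
proof -
  have "(norm (A *v v))^2 = (\<Sum>i\<in>UNIV. ((A $ i) \<bullet> v)^2)"
    by (simp add: norm_vec_sq mv_row)
  also have "\<dots> \<le> (\<Sum>i\<in>UNIV. (norm (A $ i))^2 * (norm v)^2)"
  proof (rule sum_mono)
    fix i
    have "\<bar>(A $ i) \<bullet> v\<bar> \<le> norm (A $ i) * norm v" by (rule Cauchy_Schwarz_ineq2)
    then have "\<bar>(A $ i) \<bullet> v\<bar>^2 \<le> (norm (A $ i) * norm v)^2"
      by (rule power_mono) simp
    then show "((A $ i) \<bullet> v)^2 \<le> (norm (A $ i))^2 * (norm v)^2"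
      by (simp add: power_mult_distrib)
  qed
  also have "\<dots> = (norm A * norm v)^2"
    by (simp add: norm_mat_sq_rows power_mult_distrib sum_distrib_right)
  finally show ?thesis
    by (rule power2_le_imp_le) simp
qed

lemma sn_mv: "norm (A *v v) \<le> specnorm (A::real^'n::finite^'n) * norm v"
  unfolding specnorm_def by (rule onorm) simp

lemma sn_nonneg: "0 \<le> specnorm (A::real^'n::finite^'n)"
  unfolding specnorm_def by (rule onorm_pos_le) simp

lemma sn_le_norm: "specnorm (A::real^'n::finite^'n) \<le> norm A"
  unfolding specnorm_def by (rule onorm_le) (rule mv_norm_le)

lemma sn_transpose_le: "specnorm (transpose (A::real^'n::finite^'n)) \<le> specnorm A"
  unfolding specnorm_def
proof (rule onorm_le)
  fix v :: "real^'n"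
  let ?w = "transpose A *v v"
  have "(norm ?w)^2 = v \<bullet> (A *v ?w)"
    by (simp add: power2_norm_eq_inner dot_lmul_matrix)
  also have "\<dots> \<le> norm v * norm (A *v ?w)"
    by (rule order_trans[OF abs_ge_self Cauchy_Schwarz_ineq2])
  also have "\<dots> \<le> norm v * (onorm ((*v) A) * norm ?w)"
    by (rule mult_left_mono) (simp_all add: onorm)
  finally have *: "(norm ?w)^2 \<le> (onorm ((*v) A) * norm v) * norm ?w"
    by (simp add: mult_ac)
  show "norm ?w \<le> onorm ((*v) A) * norm v"
  proof (cases "norm ?w = 0")
    case True then show ?thesis using onorm_pos_le[of "(*v) A"] by simp
  next
    case False
    then have "norm ?w > 0" by simp
    with * show ?thesis by (simp add: power2_eq_square)
  qed
qed

lemma sn_transpose: "specnorm (transpose (A::real^'n::finite^'n)) = specnorm A"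
  using sn_transpose_le[of A] sn_transpose_le[of "transpose A"] by simp

lemma sn_mult: "specnorm ((A::real^'n::finite^'n) ** B) \<le> specnorm A * specnorm B"
  unfolding specnorm_def
proof (rule onorm_le)
  fix v :: "real^'n"
  have "norm ((A ** B) *v v) = norm (A *v (B *v v))" by (simp add: matrix_vector_mul_assoc)
  also have "\<dots> \<le> onorm ((*v) A) * norm (B *v v)" by (simp add: onorm)
  also have "\<dots> \<le> onorm ((*v) A) * (onorm ((*v) B) * norm v)"
    by (rule mult_left_mono) (simp_all add: onorm onorm_pos_le)
  finally show "norm ((A ** B) *v v) \<le> onorm ((*v) A) * onorm ((*v) B) * norm v" by (simp add: mult_ac)
qed

lemma sn_add: "specnorm ((A::real^'n::finite^'n) + B) \<le> specnorm A + specnorm B"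
  unfolding specnorm_def
proof (rule onorm_le)
  fix v :: "real^'n"
  have "norm ((A + B) *v v) = norm (A *v v + B *v v)" by (simp add: matrix_vector_mult_add_rdistrib)
  also have "\<dots> \<le> norm (A *v v) + norm (B *v v)" by (rule norm_triangle_ineq)
  also have "\<dots> \<le> onorm ((*v) A) * norm v + onorm ((*v) B) * norm v"
    by (intro add_mono) (simp_all add: onorm)
  finally show "norm ((A + B) *v v) \<le> (onorm ((*v) A) + onorm ((*v) B)) * norm v" by (simp add: algebra_simps)
qed

lemma sn_scale: "specnorm (c *\<^sub>R (A::real^'n::finite^'n)) = \<bar>c\<bar> * specnorm A"
proof -
  have "(\<lambda>v. (c *\<^sub>R A) *v v) = (\<lambda>v. c *\<^sub>R (A *v v))"
    by (simp add: scaleR_matrix_vector_assoc)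
  then show ?thesis unfolding specnorm_def
    by (simp add: onorm_scaleR)
qed

lemma sn_diff: "specnorm ((A::real^'n::finite^'n) - B) \<le> specnorm A + specnorm B"
  using sn_add[of A "-B"] sn_scale[of "-1" B] by simp

lemma sn_id: "specnorm (mat 1 :: real^'n::finite^'n) \<le> 1"
  unfolding specnorm_def by (rule onorm_le) simp

lemma row_mult: "((A::real^'n::finite^'n) ** B) $ i = transpose B *v (A $ i)"
  by (simp add: vec_eq_iff matrix_matrix_mult_def vector_matrix_mult_def)

lemma norm_mult_right: "norm ((A::real^'n::finite^'n) ** B) \<le> norm A * specnorm B"
proof -
  have "(norm (A ** B))^2 = (\<Sum>i\<in>UNIV. (norm (transpose B *v (A $ i)))^2)"
    by (simp add: norm_mat_sq_rows row_mult)
  also have "\<dots> \<le> (\<Sum>i\<in>UNIV. (specnorm B * norm (A $ i))^2)"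
  proof (rule sum_mono)
    fix i
    show "(norm (transpose B *v (A $ i)))^2 \<le> (specnorm B * norm (A $ i))^2"
      using sn_mv[of "transpose B" "A $ i"] by (intro power_mono) (simp_all add: sn_transpose)
  qed
  also have "\<dots> = (norm A * specnorm B)^2"
    by (simp add: norm_mat_sq_rows power_mult_distrib sum_distrib_left mult.commute)
  finally show ?thesis
    by (rule power2_le_imp_le) (simp add: sn_nonneg)
qed

lemma norm_mult_left: "norm ((A::real^'n::finite^'n) ** (B::real^'n^'n)) \<le> specnorm A * norm B"
proof -
  have "norm (A ** B) = norm (transpose (A ** B))"
    by (simp add: norm_transpose)
  also have "\<dots> = norm (transpose B ** transpose A)"
    by (simp add: matrix_transpose_mul)
  also have "\<dots> \<le> norm (transpose B) * specnorm (transpose A)" by (rule norm_mult_right)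
  finally show ?thesis by (simp add: norm_transpose sn_transpose mult.commute)
qed

lemma norm_mult_le: "norm ((A::real^'n::finite^'n) ** (B::real^'n^'n)) \<le> norm A * norm B"
  using norm_mult_left[of A B] mult_right_mono[OF sn_le_norm[of A] norm_ge_zero[of B]] by linarith

lemma bb_mult: "bounded_bilinear ((**) :: real^('n::finite)^'n \<Rightarrow> real^'n^'n \<Rightarrow> real^'n^'n)"
proof
  fix a a' b b' :: "real^'n^'n" and r :: real
  show "(a + a') ** b = a ** b + a' ** b" by (vector matrix_matrix_mult_def sum.distrib[symmetric] field_simps)
  show "a ** (b + b') = a ** b + a ** b'" by (rule matrix_add_ldistrib)
  show "(r *\<^sub>R a) ** b = r *\<^sub>R (a ** b)"
    by (simp add: vec_eq_iff matrix_matrix_mult_def sum_distrib_left mult_ac)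
  show "a ** (r *\<^sub>R b) = r *\<^sub>R (a ** b)"
    by (simp add: vec_eq_iff matrix_matrix_mult_def sum_distrib_left mult_ac)
next
  show "\<exists>K. \<forall>(a::real^'n^'n) (b::real^'n^'n). norm (a ** b) \<le> norm a * norm b * K"
    using norm_mult_le by (intro exI[of _ 1]) auto
qed

lemma quad_zero:
  fixes k q :: real
  assumes "\<forall>s. 2 * s * k + s^2 * q \<le> 0"
  shows "k = 0"
proof -
  define s where "s = k / (\<bar>q\<bar> + 1)"
  have pos: "\<bar>q\<bar> + 1 > 0" by simp
  have "2 * s * k + s^2 * q \<le> 0" using assms by simp
  then have "(2 * s * k + s^2 * q) * (\<bar>q\<bar> + 1)^2 \<le> 0"
    by (simp add: mult_nonpos_nonneg)
  moreover have "(2 * s * k + s^2 * q) * (\<bar>q\<bar> + 1)^2 = 2*k*(s*(\<bar>q\<bar> + 1))*(\<bar>q\<bar> + 1) + (s*(\<bar>q\<bar> + 1))^2*q"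
    by (simp add: algebra_simps power2_eq_square)
  moreover have "s*(\<bar>q\<bar> + 1) = k" using pos unfolding s_def by simp
  ultimately have "2*k*k*(\<bar>q\<bar> + 1) + k^2*q \<le> 0" by simp
  moreover have "2*k*k*(\<bar>q\<bar> + 1) + k^2*q = k^2 * (2*\<bar>q\<bar> + 2 + q)"
    by (simp add: algebra_simps power2_eq_square)
  ultimately have "k^2 * (2*\<bar>q\<bar> + 2 + q) \<le> 0" by linarith
  moreover have "2*\<bar>q\<bar> + 2 + q > 0" by linarith
  ultimately have "k^2 \<le> 0" by (simp add: mult_le_0_iff)
  then show ?thesis by simp
qed

lemma sym_inner:
  assumes "transpose S = (S::real^'n::finite^'n)"
  shows "w \<bullet> (S *v v) = v \<bullet> (S *v w)"
proof -
  have "w \<bullet> (S *v v) = (w v* S) \<bullet> v" by (simp add: dot_lmul_matrix)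
  also have "w v* S = S *v w" using assms by (metis transpose_matrix_vector)
  finally show ?thesis by (simp add: inner_commute)
qed

lemma quad_expand:
  fixes S :: "real^'n::finite^'n"
  assumes sym: "transpose S = S"
  shows "(norm (S *v (v0 + s *\<^sub>R w)))^2 - \<rho> * ((v0 + s *\<^sub>R w) \<bullet> (S *v (v0 + s *\<^sub>R w)))
     = ((norm (S *v v0))^2 - \<rho> * (v0 \<bullet> (S *v v0)))
       + 2 * s * ((S *v v0) \<bullet> (S *v w) - \<rho> * (w \<bullet> (S *v v0)))
       + s^2 * ((norm (S *v w))^2 - \<rho> * (w \<bullet> (S *v w)))"
  using sym_inner[OF sym, of v0 w]
  apply (simp only: power2_norm_eq_inner)
  by (simp add: matrix_vector_right_distrib matrix_vector_mult_scaleR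
      inner_add_left inner_add_right inner_commute[of "S *v w" "S *v v0"] algebra_simps power2_eq_square)

lemma crit_eig:
  fixes S :: "real^'n::finite^'n"
  assumes sym: "transpose S = S"
    and posdef: "\<forall>x. x \<noteq> 0 \<longrightarrow> x \<bullet> (S *v x) > 0"
    and v0: "v0 \<noteq> 0"
    and a: "(norm (S *v v0))^2 = \<rho> * (v0 \<bullet> (S *v v0))"
    and sg: "\<sigma> = 1 \<or> \<sigma> = -1"
    and le: "\<forall>s w. \<sigma> * ((norm (S *v (v0 + s *\<^sub>R w)))^2 - \<rho> * ((v0 + s *\<^sub>R w) \<bullet> (S *v (v0 + s *\<^sub>R w)))) \<le> 0"
  shows "is_eigenvalue S \<rho>"
proof -
  have k0: "(S *v v0) \<bullet> (S *v w) - \<rho> * (w \<bullet> (S *v v0)) = 0" for w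
  proof -
    let ?k = "\<sigma> * ((S *v v0) \<bullet> (S *v w) - \<rho> * (w \<bullet> (S *v v0)))"
    let ?q = "\<sigma> * ((norm (S *v w))^2 - \<rho> * (w \<bullet> (S *v w)))"
    have "\<forall>s. 2 * s * ?k + s^2 * ?q \<le> 0"
    proof
      fix s
      have "\<sigma> * ((norm (S *v (v0 + s *\<^sub>R w)))^2 - \<rho> * ((v0 + s *\<^sub>R w) \<bullet> (S *v (v0 + s *\<^sub>R w)))) \<le> 0"
        using le by blast
      then show "2 * s * ?k + s^2 * ?q \<le> 0"
        unfolding quad_expand[OF sym] using a by (simp add: algebra_simps)
    qed
    from quad_zero[OF this] sg show ?thesis by auto
  qed
  define u where "u = S *v v0 - \<rho> *\<^sub>R v0"
  have "(S *v u) \<bullet> w = 0" for w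
  proof -
    have "(S *v u) \<bullet> w = w \<bullet> (S *v u)" by (simp add: inner_commute)
    also have "\<dots> = u \<bullet> (S *v w)" by (rule sym_inner[OF sym])
    also have "\<dots> = (S *v v0) \<bullet> (S *v w) - \<rho> * (v0 \<bullet> (S *v w))"
      unfolding u_def by (simp add: inner_diff_left)
    also have "v0 \<bullet> (S *v w) = w \<bullet> (S *v v0)" by (rule sym_inner[OF sym, symmetric])
    finally show ?thesis using k0[of w] by simp
  qed
  then have "S *v u = 0" by (metis inner_eq_zero_iff)
  then have "u = 0" using posdef by (metis inner_zero_right less_irrefl)
  then have "S *v v0 = \<rho> *\<^sub>R v0" unfolding u_def by simp
  with v0 show ?thesis unfolding is_eigenvalue_def by blast
qed

definition Rq :: "real^'n::finite^'n \<Rightarrow> real^'n \<Rightarrow> real" where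
  "Rq S x = (norm (S *v x))^2 / (x \<bullet> (S *v x))"

lemma Rq_scale: 
  assumes "c \<noteq> 0" shows "Rq S (c *\<^sub>R x) = Rq S x"
proof -
  have 1: "(norm (S *v (c *\<^sub>R x)))^2 = c^2 * (norm (S *v x))^2"
    by (simp add: matrix_vector_mult_scaleR power_mult_distrib)
  have 2: "(c *\<^sub>R x) \<bullet> (S *v (c *\<^sub>R x)) = c^2 * (x \<bullet> (S *v x))"
    by (simp add: matrix_vector_mult_scaleR power2_eq_square)
  have "c^2 \<noteq> 0" using assms by simp
  then show ?thesis unfolding Rq_def 1 2 by simp
qed

lemma Rq_cont:
  fixes S :: "real^'n::finite^'n"
  assumes posdef: "\<forall>x. x \<noteq> 0 \<longrightarrow> x \<bullet> (S *v x) > 0"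
  shows "continuous_on (sphere 0 1) (Rq S)"
proof -
  have "continuous_on (sphere 0 1) (\<lambda>x. (norm (S *v x))^2 / (x \<bullet> (S *v x)))"
  proof (intro continuous_intros ballI)
    fix x :: "real^'n" assume "x \<in> sphere 0 1"
    then have "x \<noteq> 0" by auto
    then show "x \<bullet> (S *v x) \<noteq> 0" using posdef by (metis less_irrefl)
  qed
  then show ?thesis unfolding Rq_def by (simp add: o_def)
qed

lemma sig_bounds:
  fixes S :: "real^'n::finite^'n"
  assumes sym: "transpose S = S"
    and posdef: "\<forall>x. x \<noteq> 0 \<longrightarrow> x \<bullet> (S *v x) > 0"
    and Mmax: "\<forall>lam. is_eigenvalue S lam \<longrightarrow> lam \<le> M"
    and mmin: "\<forall>lam. is_eigenvalue S lam \<longrightarrow> m \<le> lam"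
  shows "(norm (S *v v))^2 \<le> M * (v \<bullet> (S *v v))" and "m * (v \<bullet> (S *v v)) \<le> (norm (S *v v))^2"
proof -
  obtain e :: "real^'n" where e: "norm e = 1" using vector_choose_size[of 1] by auto
  then have ne: "sphere (0::real^'n) 1 \<noteq> {}" by auto
  have Rv: "Rq S x = Rq S (x /\<^sub>R norm x)" if "x \<noteq> 0" for x
    using Rq_scale[of "inverse (norm x)" S x] that by simp
  have Rmul: "(norm (S *v x))^2 = Rq S x * (x \<bullet> (S *v x))" if "x \<noteq> 0" for x
    using posdef that unfolding Rq_def by (metis less_irrefl nonzero_eq_divide_eq)
  have dpos: "x \<bullet> (S *v x) > 0" if "x \<noteq> 0" for x using posdef that by blast
  have sph: "x /\<^sub>R norm x \<in> sphere 0 1" if "x \<noteq> 0" for x :: "real^'n" using that by simp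
  {
    obtain v0 where v0: "v0 \<in> sphere 0 1" and mx: "\<forall>y\<in>sphere 0 1. Rq S y \<le> Rq S v0"
      using continuous_attains_sup[OF compact_sphere ne Rq_cont[OF posdef]] by blast
    have v00: "v0 \<noteq> 0" using v0 by auto
    have all: "Rq S x \<le> Rq S v0" if "x \<noteq> 0" for x
      using Rv[OF that] mx sph[OF that] by simp
    have "is_eigenvalue S (Rq S v0)"
    proof (rule crit_eig[OF sym posdef v00 Rmul[OF v00], of 1])
      show "\<forall>s w. 1 * ((norm (S *v (v0 + s *\<^sub>R w)))^2 - Rq S v0 * ((v0 + s *\<^sub>R w) \<bullet> (S *v (v0 + s *\<^sub>R w)))) \<le> 0"
      proof (intro allI)
        fix s w
        let ?x = "v0 + s *\<^sub>R w"
        show "1 * ((norm (S *v ?x))^2 - Rq S v0 * (?x \<bullet> (S *v ?x))) \<le> 0"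
        proof (cases "?x = 0")
          case True then show ?thesis by simp
        next
          case False
          have "(norm (S *v ?x))^2 = Rq S ?x * (?x \<bullet> (S *v ?x))" by (rule Rmul[OF False])
          also have "\<dots> \<le> Rq S v0 * (?x \<bullet> (S *v ?x))"
            using all[OF False] dpos[OF False] by (simp add: mult_right_mono)
          finally show ?thesis by simp
        qed
      qed
    qed simp
    then have "Rq S v0 \<le> M" using Mmax by blast
    then show "(norm (S *v v))^2 \<le> M * (v \<bullet> (S *v v))"
    proof (cases "v = 0")
      case False
      have "(norm (S *v v))^2 = Rq S v * (v \<bullet> (S *v v))" by (rule Rmul[OF False])
      also have "\<dots> \<le> M * (v \<bullet> (S *v v))"
        using all[OF False] \<open>Rq S v0 \<le> M\<close> dpos[OF False] by (simp add: mult_right_mono)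
      finally show ?thesis .
    qed simp
  }
  {
    obtain v0 where v0: "v0 \<in> sphere 0 1" and mn: "\<forall>y\<in>sphere 0 1. Rq S v0 \<le> Rq S y"
      using continuous_attains_inf[OF compact_sphere ne Rq_cont[OF posdef]] by blast
    have v00: "v0 \<noteq> 0" using v0 by auto
    have all: "Rq S v0 \<le> Rq S x" if "x \<noteq> 0" for x
      using Rv[OF that] mn sph[OF that] by simp
    have "is_eigenvalue S (Rq S v0)"
    proof (rule crit_eig[OF sym posdef v00 Rmul[OF v00], of "-1"])
      show "\<forall>s w. -1 * ((norm (S *v (v0 + s *\<^sub>R w)))^2 - Rq S v0 * ((v0 + s *\<^sub>R w) \<bullet> (S *v (v0 + s *\<^sub>R w)))) \<le> 0"
      proof (intro allI)
        fix s w
        let ?x = "v0 + s *\<^sub>R w"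
        show "-1 * ((norm (S *v ?x))^2 - Rq S v0 * (?x \<bullet> (S *v ?x))) \<le> 0"
        proof (cases "?x = 0")
          case True then show ?thesis by simp
        next
          case False
          have "Rq S v0 * (?x \<bullet> (S *v ?x)) \<le> Rq S ?x * (?x \<bullet> (S *v ?x))"
            using all[OF False] dpos[OF False] by (simp add: mult_right_mono)
          also have "\<dots> = (norm (S *v ?x))^2" by (rule Rmul[OF False, symmetric])
          finally show ?thesis by simp
        qed
      qed
    qed simp
    then have "m \<le> Rq S v0" using mmin by blast
    then show "m * (v \<bullet> (S *v v)) \<le> (norm (S *v v))^2"
    proof (cases "v = 0")
      case False
      have "m * (v \<bullet> (S *v v)) \<le> Rq S v * (v \<bullet> (S *v v))"
        using all[OF False] \<open>m \<le> Rq S v0\<close> dpos[OF False] by (simp add: mult_right_mono)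
      also have "\<dots> = (norm (S *v v))^2" by (rule Rmul[OF False, symmetric])
      finally show ?thesis .
    qed simp
  }
qed

definition Fm :: "nat \<Rightarrow> (nat \<Rightarrow> real^'n::finite^'n) \<Rightarrow> nat \<Rightarrow> real^'n^'n" where
  "Fm N th k = mat 1 + (1 / real N) *\<^sub>R th k"

fun seg :: "nat \<Rightarrow> (nat \<Rightarrow> real^'n::finite^'n) \<Rightarrow> nat \<Rightarrow> nat \<Rightarrow> real^'n^'n" where
  "seg N th a 0 = mat 1"
| "seg N th a (Suc j) = Fm N th (a + Suc j) ** seg N th a j"

lemma resprod_seg: "resprod N th k = seg N th 0 k"
  by (induction k) (simp_all add: Fm_def)

lemma seg_add: "seg N th a (j + i) = seg N th (a + j) i ** seg N th a j"
  by (induction i) (simp_all add: matrix_mul_assoc add.assoc)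

lemma seg_cong: "(\<And>k. a < k \<Longrightarrow> k \<le> a + j \<Longrightarrow> th k = th' k) \<Longrightarrow> seg N th a j = seg N th' a j"
  by (induction j) (simp_all add: Fm_def)

lemma seg_split:
  assumes "1 \<le> n" "n \<le> N"
  shows "seg N th 0 N = seg N th n (N - n) ** Fm N th n ** seg N th 0 (n - 1)"
proof -
  have "seg N th 0 N = seg N th 0 (n + (N - n))" using assms by simp
  also have "\<dots> = seg N th n (N - n) ** seg N th 0 n" by (simp add: seg_add)
  also have "seg N th 0 n = Fm N th n ** seg N th 0 (n - 1)"
  proof -
    obtain n' where "n = Suc n'" using assms by (cases n) auto
    then show ?thesis by simp
  qed
  finally show ?thesis by (simp add: matrix_mul_assoc)
qed

definition Aft where "Aft N th n = seg N th n (N - n)"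
definition Bef where "Bef N th n = seg N th 0 (n - 1)"

definition grad :: "real^'n::finite^'n \<Rightarrow> real^'n^'n \<Rightarrow> nat \<Rightarrow> (nat \<Rightarrow> real^'n^'n) \<Rightarrow> nat \<Rightarrow> real^'n^'n" where
  "grad Sig B N th n = (2 / real N) *\<^sub>R (transpose (Aft N th n) ** ((resprod N th N - B) ** Sig) ** transpose (Bef N th n))"

lemma Aft_upd: "n \<le> N \<Longrightarrow> Aft N (th(n := X)) n = Aft N th n"
  unfolding Aft_def by (rule seg_cong) auto

lemma Bef_upd: "1 \<le> n \<Longrightarrow> Bef N (th(n := X)) n = Bef N th n"
  unfolding Bef_def by (rule seg_cong) auto

lemma adj_both: "(P::real^'n::finite^'n) \<bullet> ((A::real^'n^'n) ** (h::real^'n^'n) ** (C::real^'n^'n)) = (transpose A ** P ** transpose C) \<bullet> h"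
proof -
  have "P \<bullet> (A ** h ** C) = (P ** transpose C) \<bullet> (A ** h)" by (rule adj_right)
  also have "\<dots> = (transpose A ** (P ** transpose C)) \<bullet> h" by (rule adj_left)
  finally show ?thesis by (simp add: matrix_mul_assoc)
qed

lemma quad_deriv:
  fixes Y :: "'a::real_normed_vector \<Rightarrow> real^'n::finite^'n"
  assumes sym: "transpose Sig = Sig" and Y: "(Y has_derivative Y') (at x within s)"
  shows "((\<lambda>x. Y x \<bullet> (Y x ** Sig)) has_derivative (\<lambda>h. 2 * ((Y x ** Sig) \<bullet> Y' h))) (at x within s)"
proof -
  have YS: "((\<lambda>x. Y x ** Sig) has_derivative (\<lambda>h. Y x ** 0 + Y' h ** Sig)) (at x within s)"
    by (rule bounded_bilinear.FDERIV[OF bb_mult Y has_derivative_const])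
  have "((\<lambda>x. Y x \<bullet> (Y x ** Sig)) has_derivative (\<lambda>h. Y x \<bullet> (Y x ** 0 + Y' h ** Sig) + Y' h \<bullet> (Y x ** Sig))) (at x within s)"
    by (rule has_derivative_inner[OF Y YS])
  moreover have "(\<lambda>h. Y x \<bullet> (Y x ** 0 + Y' h ** Sig) + Y' h \<bullet> (Y x ** Sig)) = (\<lambda>h. 2 * ((Y x ** Sig) \<bullet> Y' h))"
  proof
    fix h
    have "Y x \<bullet> (Y' h ** Sig) = (Y x ** Sig) \<bullet> Y' h" using adj_right[of "Y x" "Y' h" Sig] sym by simp
    then show "Y x \<bullet> (Y x ** 0 + Y' h ** Sig) + Y' h \<bullet> (Y x ** Sig) = 2 * ((Y x ** Sig) \<bullet> Y' h)"
      by (simp add: inner_commute)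
  qed
  ultimately show ?thesis by simp
qed

lemma lossL_quad: "lossL Sig B N th = (resprod N th N - B) \<bullet> ((resprod N th N - B) ** Sig)"
  unfolding lossL_def sig_norm2_def by (simp add: trace_quad)

lemma gradient_formula:
  fixes Sig B :: "real^'n::finite^'n"
  assumes sym: "transpose Sig = Sig" and n: "1 \<le> n" "n \<le> N"
  shows "is_gradient (\<lambda>X. lossL Sig B N (th(n := X))) (th n) (grad Sig B N th n)"
proof -
  let ?A = "Aft N th n" and ?C = "Bef N th n" and ?c = "1 / real N"
  define Y where "Y X = ?A ** (mat 1 + ?c *\<^sub>R X) ** ?C - B" for X
  have resp: "resprod N (th(n := X)) N = ?A ** (mat 1 + ?c *\<^sub>R X) ** ?C" for X
  proof -
    have "resprod N (th(n := X)) N = Aft N (th(n := X)) n ** Fm N (th(n := X)) n ** Bef N (th(n := X)) n"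
      unfolding resprod_seg Aft_def Bef_def by (rule seg_split[OF n])
    also have "\<dots> = ?A ** (mat 1 + ?c *\<^sub>R X) ** ?C"
      unfolding Aft_upd[OF n(2)] Bef_upd[OF n(1)] by (simp add: Fm_def)
    finally show ?thesis .
  qed
  have f_eq: "(\<lambda>X. lossL Sig B N (th(n := X))) = (\<lambda>X. Y X \<bullet> (Y X ** Sig))"
    unfolding lossL_quad resp Y_def by simp
  have Y_aff: "Y X = ?c *\<^sub>R (?A ** X ** ?C) + (?A ** ?C - B)" for X
    unfolding Y_def
    by (simp add: matrix_add_ldistrib bounded_bilinear.add_left[OF bb_mult]
        bounded_bilinear.scaleR_left[OF bb_mult] bounded_bilinear.scaleR_right[OF bb_mult])
  have bl: "bounded_linear (\<lambda>X. ?c *\<^sub>R (?A ** X ** ?C))"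
  proof -
    have "bounded_linear (\<lambda>X. ?A ** X ** ?C)"
      by (rule bounded_linear_compose[OF bounded_bilinear.bounded_linear_left[OF bb_mult] bounded_bilinear.bounded_linear_right[OF bb_mult]])
    then show ?thesis by (rule bounded_linear_compose[OF bounded_linear_scaleR_right])
  qed
  have Yd: "(Y has_derivative (\<lambda>h. ?c *\<^sub>R (?A ** h ** ?C))) (at (th n))"
    unfolding Y_aff[abs_def]
    by (rule has_derivative_add_const[OF bounded_linear.has_derivative[OF bl has_derivative_ident]])
  have Q: "((\<lambda>X. Y X \<bullet> (Y X ** Sig)) has_derivative (\<lambda>h. 2 * ((Y (th n) ** Sig) \<bullet> (?c *\<^sub>R (?A ** h ** ?C))))) (at (th n))"
    by (rule quad_deriv[OF sym Yd])
  have Yth: "Y (th n) = resprod N th N - B"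
    using resp[of "th n"] unfolding Y_def by simp
  have "(\<lambda>h. 2 * ((Y (th n) ** Sig) \<bullet> (?c *\<^sub>R (?A ** h ** ?C)))) = (\<lambda>h. grad Sig B N th n \<bullet> h)"
  proof
    fix h
    show "2 * ((Y (th n) ** Sig) \<bullet> (?c *\<^sub>R (?A ** h ** ?C))) = grad Sig B N th n \<bullet> h"
      unfolding grad_def Yth by (simp add: adj_both)
  qed
  with Q f_eq show ?thesis unfolding is_gradient_def by simp
qed

lemma Fm_deriv:
  assumes "(Th has_vector_derivative Th') (at t within S)"
  shows "((\<lambda>t. mat 1 + c *\<^sub>R Th t) has_vector_derivative (c *\<^sub>R Th')) (at t within S)"
  using has_vector_derivative_add[OF has_vector_derivative_const bounded_linear.has_vector_derivative[OF bounded_linear_scaleR_right assms, of c]]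
  by simp

lemma seg_deriv:
  fixes Th :: "nat \<Rightarrow> real \<Rightarrow> real^'n::finite^'n"
  assumes "\<forall>k\<in>{1..j}. (Th k has_vector_derivative Th' k) (at t within S)"
  shows "((\<lambda>t. seg N (\<lambda>k. Th k t) 0 j) has_vector_derivative
     (\<Sum>n\<in>{1..j}. seg N (\<lambda>k. Th k t) n (j - n) ** ((1 / real N) *\<^sub>R Th' n) ** seg N (\<lambda>k. Th k t) 0 (n - 1))) (at t within S)"
  using assms
proof (induction j)
  case 0
  then show ?case by simp
next
  case (Suc j)
  let ?th = "\<lambda>k. Th k t" and ?c = "1 / real N"
  have IH: "((\<lambda>t. seg N (\<lambda>k. Th k t) 0 j) has_vector_derivative
     (\<Sum>n\<in>{1..j}. seg N ?th n (j - n) ** (?c *\<^sub>R Th' n) ** seg N ?th 0 (n - 1))) (at t within S)"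
    using Suc by auto
  have F: "((\<lambda>t. mat 1 + ?c *\<^sub>R Th (Suc j) t) has_vector_derivative (?c *\<^sub>R Th' (Suc j))) (at t within S)"
    using Suc.prems by (intro Fm_deriv) auto
  have P: "((\<lambda>t. (mat 1 + ?c *\<^sub>R Th (Suc j) t) ** seg N (\<lambda>k. Th k t) 0 j) has_vector_derivative
      ((mat 1 + ?c *\<^sub>R Th (Suc j) t) ** (\<Sum>n\<in>{1..j}. seg N ?th n (j - n) ** (?c *\<^sub>R Th' n) ** seg N ?th 0 (n - 1))
       + (?c *\<^sub>R Th' (Suc j)) ** seg N ?th 0 j)) (at t within S)"
    by (rule bounded_bilinear.has_vector_derivative[OF bb_mult F IH])
  have eq: "(mat 1 + ?c *\<^sub>R Th (Suc j) t) ** (\<Sum>n\<in>{1..j}. seg N ?th n (j - n) ** (?c *\<^sub>R Th' n) ** seg N ?th 0 (n - 1))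
       + (?c *\<^sub>R Th' (Suc j)) ** seg N ?th 0 j
     = (\<Sum>n\<in>{1..Suc j}. seg N ?th n (Suc j - n) ** (?c *\<^sub>R Th' n) ** seg N ?th 0 (n - 1))"
  proof -
    have "(mat 1 + ?c *\<^sub>R Th (Suc j) t) ** (\<Sum>n\<in>{1..j}. seg N ?th n (j - n) ** (?c *\<^sub>R Th' n) ** seg N ?th 0 (n - 1))
       = (\<Sum>n\<in>{1..j}. (mat 1 + ?c *\<^sub>R Th (Suc j) t) ** (seg N ?th n (j - n) ** (?c *\<^sub>R Th' n) ** seg N ?th 0 (n - 1)))"
      by (rule bounded_bilinear.sum_right[OF bb_mult])
    also have "\<dots> = (\<Sum>n\<in>{1..j}. seg N ?th n (Suc j - n) ** (?c *\<^sub>R Th' n) ** seg N ?th 0 (n - 1))"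
    proof (rule sum.cong[OF refl])
      fix n assume n: "n \<in> {1..j}"
      then have "Suc j - n = Suc (j - n)" "n + Suc (j - n) = Suc j" by auto
      then have "seg N ?th n (Suc j - n) = (mat 1 + ?c *\<^sub>R Th (Suc j) t) ** seg N ?th n (j - n)"
        by (simp add: Fm_def)
      then show "(mat 1 + ?c *\<^sub>R Th (Suc j) t) ** (seg N ?th n (j - n) ** (?c *\<^sub>R Th' n) ** seg N ?th 0 (n - 1))
          = seg N ?th n (Suc j - n) ** (?c *\<^sub>R Th' n) ** seg N ?th 0 (n - 1)"
        by (simp add: matrix_mul_assoc)
    qed
    finally show ?thesis by simp
  qed
  have segS: "(\<lambda>t. seg N (\<lambda>k. Th k t) 0 (Suc j)) = (\<lambda>t. (mat 1 + ?c *\<^sub>R Th (Suc j) t) ** seg N (\<lambda>k. Th k t) 0 j)"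
    by (simp add: Fm_def)
  show ?case unfolding segS using P eq by simp
qed

lemma loss_deriv:
  fixes Th :: "nat \<Rightarrow> real \<Rightarrow> real^'n::finite^'n" and Sig B :: "real^'n^'n"
  assumes sym: "transpose Sig = Sig"
    and d: "\<forall>k\<in>{1..N}. (Th k has_vector_derivative Th' k) (at t within S)"
  shows "((\<lambda>t. lossL Sig B N (\<lambda>k. Th k t)) has_real_derivative
      (\<Sum>n\<in>{1..N}. grad Sig B N (\<lambda>k. Th k t) n \<bullet> Th' n)) (at t within S)"
proof -
  let ?th = "\<lambda>k. Th k t" and ?c = "1 / real N"
  define D where "D = (\<Sum>n\<in>{1..N}. seg N ?th n (N - n) ** (?c *\<^sub>R Th' n) ** seg N ?th 0 (n - 1))"
  define Y where "Y t = seg N (\<lambda>k. Th k t) 0 N - B" for t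
  have Yd: "(Y has_vector_derivative D) (at t within S)"
    unfolding Y_def D_def has_vector_derivative_diff_const by (rule seg_deriv[OF d])
  have Q: "((\<lambda>t. Y t \<bullet> (Y t ** Sig)) has_derivative (\<lambda>h. 2 * ((Y t ** Sig) \<bullet> (h *\<^sub>R D)))) (at t within S)"
    by (rule quad_deriv[OF sym Yd[unfolded has_vector_derivative_def]])
  have val: "2 * ((Y t ** Sig) \<bullet> D) = (\<Sum>n\<in>{1..N}. grad Sig B N ?th n \<bullet> Th' n)"
    unfolding D_def inner_sum_right sum_distrib_left
  proof (rule sum.cong[OF refl])
    fix n
    show "2 * ((Y t ** Sig) \<bullet> (seg N ?th n (N - n) ** (?c *\<^sub>R Th' n) ** seg N ?th 0 (n - 1))) = grad Sig B N ?th n \<bullet> Th' n"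
      unfolding grad_def Y_def Aft_def Bef_def resprod_seg
      by (simp add: adj_both bounded_bilinear.scaleR_left[OF bb_mult] bounded_bilinear.scaleR_right[OF bb_mult])
  qed
  have "(\<lambda>h. 2 * ((Y t ** Sig) \<bullet> (h *\<^sub>R D))) = (*) (\<Sum>n\<in>{1..N}. grad Sig B N ?th n \<bullet> Th' n)"
    unfolding val[symmetric] by (auto simp: fun_eq_iff)
  with Q have "((\<lambda>t. Y t \<bullet> (Y t ** Sig)) has_real_derivative (\<Sum>n\<in>{1..N}. grad Sig B N ?th n \<bullet> Th' n)) (at t within S)"
    unfolding has_field_derivative_def by simp
  moreover have "(\<lambda>t. lossL Sig B N (\<lambda>k. Th k t)) = (\<lambda>t. Y t \<bullet> (Y t ** Sig))"
    unfolding lossL_quad Y_def resprod_seg by simp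
  ultimately show ?thesis by simp
qed

lemmas mm_add_left = bounded_bilinear.add_left[OF bb_mult]
lemmas mm_add_right = bounded_bilinear.add_right[OF bb_mult]
lemmas mm_diff_left = bounded_bilinear.diff_left[OF bb_mult]
lemmas mm_diff_right = bounded_bilinear.diff_right[OF bb_mult]
lemmas mm_scaleR_left = bounded_bilinear.scaleR_left[OF bb_mult]
lemmas mm_scaleR_right = bounded_bilinear.scaleR_right[OF bb_mult]

lemma factor_upper:
  fixes Y Z :: "real^'n::finite^'n"
  assumes "specnorm Y \<le> r"
  shows "norm ((mat 1 + Y) ** Z) \<le> (1 + r) * norm Z"
proof -
  have "norm ((mat 1 + Y) ** Z) = norm (Z + Y ** Z)" by (simp add: mm_add_left)
  also have "\<dots> \<le> norm Z + norm (Y ** Z)" by (rule norm_triangle_ineq)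
  also have "norm (Y ** Z) \<le> r * norm Z"
    using norm_mult_left[of Y Z] mult_right_mono[OF assms norm_ge_zero[of Z]] by linarith
  finally show ?thesis by (simp add: algebra_simps)
qed

lemma factor_lower:
  fixes Y Z :: "real^'n::finite^'n"
  assumes "specnorm Y \<le> r"
  shows "(1 - r) * norm Z \<le> norm ((mat 1 + Y) ** Z)"
proof -
  have "norm Z = norm ((mat 1 + Y) ** Z - Y ** Z)" by (simp add: mm_add_left)
  also have "\<dots> \<le> norm ((mat 1 + Y) ** Z) + norm (Y ** Z)" by (rule norm_triangle_ineq4)
  also have "norm (Y ** Z) \<le> r * norm Z"
    using norm_mult_left[of Y Z] mult_right_mono[OF assms norm_ge_zero[of Z]] by linarith
  finally show ?thesis by (simp add: algebra_simps)
qed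

definition good :: "nat \<Rightarrow> (nat \<Rightarrow> real^'n::finite^'n) \<Rightarrow> bool" where
  "good N th \<longleftrightarrow> (\<forall>k\<in>{1..N}. specnorm (th k) \<le> 1/2)"

lemma Fm_sn:
  assumes "N \<ge> 1" "specnorm (th k) \<le> 1/2"
  shows "specnorm ((1 / real N) *\<^sub>R th k) \<le> 1 / (2 * real N)"
    and "specnorm ((1 / real N) *\<^sub>R transpose (th k)) \<le> 1 / (2 * real N)"
proof -
  have "(1 / real N) * specnorm (th k) \<le> (1 / real N) * (1/2)"
    using assms by (intro mult_left_mono) auto
  then show "specnorm ((1 / real N) *\<^sub>R th k) \<le> 1 / (2 * real N)"
    "specnorm ((1 / real N) *\<^sub>R transpose (th k)) \<le> 1 / (2 * real N)"
    by (simp_all add: sn_scale sn_transpose)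
qed

lemma seg_bounds:
  fixes th :: "nat \<Rightarrow> real^'n::finite^'n" and Z :: "real^'n^'n"
  assumes N: "N \<ge> 1" and g: "\<forall>k. a < k \<and> k \<le> a + j \<longrightarrow> specnorm (th k) \<le> 1/2"
  defines "r \<equiv> 1 / (2 * real N)"
  shows "norm (seg N th a j ** Z) \<le> (1 + r)^j * norm Z"
    and "(1 - r)^j * norm Z \<le> norm (seg N th a j ** Z)"
    and "norm (transpose (seg N th a j) ** Z) \<le> (1 + r)^j * norm Z"
    and "(1 - r)^j * norm Z \<le> norm (transpose (seg N th a j) ** Z)"
proof -
  have r0: "0 \<le> r" "r \<le> 1/2" using N unfolding r_def by (auto simp: field_simps)
  have snk: "specnorm ((1 / real N) *\<^sub>R th k) \<le> r" "specnorm ((1 / real N) *\<^sub>R transpose (th k)) \<le> r"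
    if "a < k" "k \<le> a + j" for k
    using Fm_sn[OF N, of th k] g that unfolding r_def by auto
  have TF: "transpose (Fm N th k) = mat 1 + (1 / real N) *\<^sub>R transpose (th k)" for k
    by (simp add: Fm_def transpose_def vec_eq_iff mat_def)
  show "norm (seg N th a j ** Z) \<le> (1 + r)^j * norm Z"
    using g snk
  proof (induction j arbitrary: Z)
    case 0 then show ?case by simp
  next
    case (Suc j)
    have "norm (seg N th a (Suc j) ** Z) = norm (Fm N th (a + Suc j) ** (seg N th a j ** Z))"
      by (simp add: matrix_mul_assoc)
    also have "\<dots> \<le> (1 + r) * norm (seg N th a j ** Z)"
      unfolding Fm_def by (rule factor_upper) (use Suc.prems in auto)
    also have "\<dots> \<le> (1 + r) * ((1 + r)^j * norm Z)"
      by (rule mult_left_mono) (use Suc r0 in auto)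
    finally show ?case by simp
  qed
  show "(1 - r)^j * norm Z \<le> norm (seg N th a j ** Z)"
    using g snk
  proof (induction j arbitrary: Z)
    case 0 then show ?case by simp
  next
    case (Suc j)
    have "(1 - r)^(Suc j) * norm Z = (1 - r) * ((1 - r)^j * norm Z)" by simp
    also have "\<dots> \<le> (1 - r) * norm (seg N th a j ** Z)"
      by (rule mult_left_mono) (use Suc r0 in auto)
    also have "\<dots> \<le> norm (Fm N th (a + Suc j) ** (seg N th a j ** Z))"
      unfolding Fm_def by (rule factor_lower) (use Suc.prems in auto)
    also have "\<dots> = norm (seg N th a (Suc j) ** Z)"
      by (simp add: matrix_mul_assoc)
    finally show ?case .
  qed
  show "norm (transpose (seg N th a j) ** Z) \<le> (1 + r)^j * norm Z"
    using g snk
  proof (induction j arbitrary: Z)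
    case 0 then show ?case by simp
  next
    case (Suc j)
    have "norm (transpose (seg N th a (Suc j)) ** Z) = norm (transpose (seg N th a j) ** (transpose (Fm N th (a + Suc j)) ** Z))"
      by (simp add: matrix_mul_assoc matrix_transpose_mul)
    also have "\<dots> \<le> (1 + r)^j * norm (transpose (Fm N th (a + Suc j)) ** Z)"
      using Suc by auto
    also have "norm (transpose (Fm N th (a + Suc j)) ** Z) \<le> (1 + r) * norm Z"
      unfolding TF by (rule factor_upper) (use Suc.prems in auto)
    finally show ?case using r0 by (simp add: mult_left_mono mult_ac)
  qed
  show "(1 - r)^j * norm Z \<le> norm (transpose (seg N th a j) ** Z)"
    using g snk
  proof (induction j arbitrary: Z)
    case 0 then show ?case by simp
  next
    case (Suc j)
    have "(1 - r)^(Suc j) * norm Z = (1 - r)^j * ((1 - r) * norm Z)" by (simp add: mult_ac)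
    also have "\<dots> \<le> (1 - r)^j * norm (transpose (Fm N th (a + Suc j)) ** Z)"
      unfolding TF by (rule mult_left_mono, rule factor_lower) (use Suc.prems r0 in auto)
    also have "\<dots> \<le> norm (transpose (seg N th a j) ** (transpose (Fm N th (a + Suc j)) ** Z))"
      using Suc by auto
    also have "\<dots> = norm (transpose (seg N th a (Suc j)) ** Z)"
      by (simp add: matrix_mul_assoc matrix_transpose_mul)
    finally show ?case .
  qed
qed

lemma norm_right_T: "norm ((Z::real^'n::finite^'n) ** transpose (S::real^'n^'n)) = norm (S ** transpose Z)"
proof -
  have "norm (Z ** transpose S) = norm (transpose (Z ** transpose S))" by (simp add: norm_transpose)
  also have "transpose (Z ** transpose S) = S ** transpose Z" by (simp add: matrix_transpose_mul)
  finally show ?thesis .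
qed

lemma pow_upper:
  assumes "N \<ge> 1" "j \<le> N - 1"
  shows "(1 + 1 / (2 * real N))^j \<le> exp (1/2)"
proof -
  have "(1 + 1 / (2 * real N))^j \<le> (exp (1 / (2 * real N)))^j"
    by (rule power_mono) (auto simp: exp_ge_add_one_self add.commute)
  also have "\<dots> = exp (real j / (2 * real N))" by (simp add: exp_of_nat_mult[symmetric])
  also have "\<dots> \<le> exp (1/2)" using assms by (auto simp: field_simps)
  finally show ?thesis .
qed

lemma pow_lower:
  assumes "N \<ge> 1" "j \<le> N - 1"
  shows "exp (-1/2) \<le> (1 - 1 / (2 * real N))^j"
proof -
  define r where "r = 1 / (2 * real N)"
  have r: "0 < r" "r \<le> 1/2" using assms unfolding r_def by (auto simp: field_simps)
  have "1 / (1 - r) = 1 + r / (1 - r)" using r by (simp add: field_simps)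
  also have "\<dots> \<le> exp (r / (1 - r))" by (rule exp_ge_add_one_self[unfolded add.commute[of _ 1]])
  finally have "exp (- (r / (1 - r))) \<le> 1 - r"
    using r by (simp add: exp_minus field_simps)
  then have A: "(exp (- (r / (1 - r))))^j \<le> (1 - r)^j"
    by (rule power_mono) simp
  have B: "(exp (- (r / (1 - r))))^j = exp (- (real j * (r / (1 - r))))"
    by (simp add: exp_of_nat_mult[symmetric])
  have C: "real j * (r / (1 - r)) \<le> 1/2"
  proof -
    have e: "r / (1 - r) = 1 / (2 * real N - 1)" using assms unfolding r_def by (simp add: field_simps)
    have j2: "2 * real j \<le> 2 * real N - 1" using assms by linarith
    have p: "2 * real N - 1 > 0" using assms by simp
    have "real j * (r / (1 - r)) = real j / (2 * real N - 1)" using e by simp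
    also have "\<dots> \<le> 1/2" using p j2 by (simp add: pos_divide_le_eq)
    finally show ?thesis .
  qed
  from C have "exp (-1/2) \<le> exp (- (real j * (r / (1 - r))))" by simp
  also have "\<dots> = (exp (- (r / (1 - r))))^j" using B by simp
  also have "\<dots> \<le> (1 - r)^j" by (rule A)
  finally show ?thesis unfolding r_def .
qed

definition Wm :: "real^'n::finite^'n \<Rightarrow> real^'n^'n \<Rightarrow> nat \<Rightarrow> (nat \<Rightarrow> real^'n^'n) \<Rightarrow> real^'n^'n" where
  "Wm Sig B N th = (resprod N th N - B) ** Sig"

lemma grad_Wm: "grad Sig B N th n = (2 / real N) *\<^sub>R (transpose (Aft N th n) ** (Wm Sig B N th ** transpose (Bef N th n)))"
  unfolding grad_def Wm_def by (simp add: matrix_mul_assoc)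

lemma G_bounds:
  fixes th :: "nat \<Rightarrow> real^'n::finite^'n" and W :: "real^'n^'n"
  assumes N: "N \<ge> 1" and g: "good N th" and n: "1 \<le> n" "n \<le> N"
  shows "norm (transpose (Aft N th n) ** (W ** transpose (Bef N th n))) \<le> exp (1/2) * norm W"
    and "exp (-1/2) * norm W \<le> norm (transpose (Aft N th n) ** (W ** transpose (Bef N th n)))"
proof -
  let ?r = "1 / (2 * real N)"
  have gA: "\<forall>k. n < k \<and> k \<le> n + (N - n) \<longrightarrow> specnorm (th k) \<le> 1/2" using g n unfolding good_def by auto
  have gB: "\<forall>k. 0 < k \<and> k \<le> 0 + (n - 1) \<longrightarrow> specnorm (th k) \<le> 1/2" using g n unfolding good_def by auto
  have r0: "0 \<le> ?r" "?r \<le> 1/2" using N by (auto simp: field_simps)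
  have ex: "N - n + (n - 1) = N - 1" using n by simp
  have "norm (transpose (Aft N th n) ** (W ** transpose (Bef N th n))) \<le> (1 + ?r)^(N - n) * norm (W ** transpose (Bef N th n))"
    unfolding Aft_def by (rule seg_bounds(3)[OF N gA])
  also have "norm (W ** transpose (Bef N th n)) = norm (Bef N th n ** transpose W)" by (rule norm_right_T)
  also have "\<dots> \<le> (1 + ?r)^(n - 1) * norm (transpose W)"
    unfolding Bef_def by (rule seg_bounds(1)[OF N gB])
  also have "norm (transpose W) = norm W" by (rule norm_transpose)
  finally have "norm (transpose (Aft N th n) ** (W ** transpose (Bef N th n))) \<le> (1 + ?r)^(N - n) * ((1 + ?r)^(n - 1) * norm W)"
    using r0 by (simp add: mult_left_mono)
  also have "(1 + ?r)^(N - n) * ((1 + ?r)^(n - 1) * norm W) = (1 + ?r)^(N - 1) * norm W"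
    by (simp only: mult.assoc[symmetric] power_add[symmetric] ex)
  also have "\<dots> \<le> exp (1/2) * norm W"
    by (rule mult_right_mono[OF pow_upper[OF N]]) auto
  finally show "norm (transpose (Aft N th n) ** (W ** transpose (Bef N th n))) \<le> exp (1/2) * norm W" .
  have "exp (-1/2) * norm W \<le> (1 - ?r)^(N - 1) * norm W"
    by (rule mult_right_mono[OF pow_lower[OF N]]) auto
  also have "\<dots> = (1 - ?r)^(N - n) * ((1 - ?r)^(n - 1) * norm (transpose W))"
    using n by (simp add: norm_transpose power_add[symmetric] mult.assoc[symmetric])
  also have "\<dots> \<le> (1 - ?r)^(N - n) * norm (Bef N th n ** transpose W)"
    unfolding Bef_def by (rule mult_left_mono[OF seg_bounds(2)[OF N gB]]) (use r0 in simp)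
  also have "norm (Bef N th n ** transpose W) = norm (W ** transpose (Bef N th n))" by (rule norm_right_T[symmetric])
  also have "(1 - ?r)^(N - n) * \<dots> \<le> norm (transpose (Aft N th n) ** (W ** transpose (Bef N th n)))"
    unfolding Aft_def by (rule seg_bounds(4)[OF N gA])
  finally show "exp (-1/2) * norm W \<le> norm (transpose (Aft N th n) ** (W ** transpose (Bef N th n)))" .
qed

lemma grad_bounds:
  fixes th :: "nat \<Rightarrow> real^'n::finite^'n"
  assumes N: "N \<ge> 1" and g: "good N th" and n: "1 \<le> n" "n \<le> N"
  shows "norm (grad Sig B N th n) \<le> (2 / real N) * exp (1/2) * norm (Wm Sig B N th)"
    and "(2 / real N) * exp (-1/2) * norm (Wm Sig B N th) \<le> norm (grad Sig B N th n)"
proof -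
  let ?G = "transpose (Aft N th n) ** (Wm Sig B N th ** transpose (Bef N th n))"
  have e: "norm (grad Sig B N th n) = (2 / real N) * norm ?G" unfolding grad_Wm by simp
  have p: "0 \<le> 2 / real N" by simp
  show "norm (grad Sig B N th n) \<le> (2 / real N) * exp (1/2) * norm (Wm Sig B N th)"
    unfolding e mult.assoc by (rule mult_left_mono[OF G_bounds(1)[OF N g n] p])
  show "(2 / real N) * exp (-1/2) * norm (Wm Sig B N th) \<le> norm (grad Sig B N th n)"
    unfolding e mult.assoc by (rule mult_left_mono[OF G_bounds(2)[OF N g n] p])
qed

lemma grad_diff:
  fixes th :: "nat \<Rightarrow> real^'n::finite^'n"
  assumes N: "N \<ge> 1" and g: "good N th" and n: "1 \<le> n" "n + 1 \<le> N"
  shows "norm (grad Sig B N th (n + 1) - grad Sig B N th n) \<le> (2 / real N) * (1 / real N) * exp (1/2) * norm (Wm Sig B N th)"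
proof -
  let ?c = "1 / real N" and ?W = "Wm Sig B N th"
  let ?A = "Aft N th (n + 1)" and ?C = "Bef N th n"
  define Z where "Z = transpose ?A ** (?W ** transpose ?C)"
  have An: "Aft N th n = ?A ** Fm N th (n + 1)"
  proof -
    have "N - n = (N - (n + 1)) + 1" using n by simp
    then have "seg N th n (N - n) = seg N th (n + 1) (N - (n + 1)) ** seg N th n 1"
      by (metis seg_add add.commute)
    then show ?thesis unfolding Aft_def by simp
  qed
  have Cn: "Bef N th (n + 1) = Fm N th n ** ?C"
  proof -
    obtain n' where "n = Suc n'" using n by (cases n) auto
    then show ?thesis unfolding Bef_def by simp
  qed
  have TF: "transpose (Fm N th k) = mat 1 + ?c *\<^sub>R transpose (th k)" for k
    by (simp add: Fm_def transpose_def vec_eq_iff mat_def)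
  have g1: "grad Sig B N th (n + 1) = (2 / real N) *\<^sub>R (Z ** transpose (Fm N th n))"
    unfolding grad_Wm Cn Z_def by (simp add: matrix_transpose_mul matrix_mul_assoc)
  have g2: "grad Sig B N th n = (2 / real N) *\<^sub>R (transpose (Fm N th (n + 1)) ** Z)"
    unfolding grad_Wm An Z_def by (simp add: matrix_transpose_mul matrix_mul_assoc)
  have diff: "Z ** transpose (Fm N th n) - transpose (Fm N th (n + 1)) ** Z
      = ?c *\<^sub>R (Z ** transpose (th n) - transpose (th (n + 1)) ** Z)"
    unfolding TF by (simp add: mm_add_left mm_add_right mm_scaleR_left mm_scaleR_right scaleR_diff_right)
  have s1: "specnorm (th n) \<le> 1/2" "specnorm (th (n + 1)) \<le> 1/2" using g n unfolding good_def by auto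
  have "norm (Z ** transpose (th n) - transpose (th (n + 1)) ** Z) \<le> norm (Z ** transpose (th n)) + norm (transpose (th (n + 1)) ** Z)"
    by (rule norm_triangle_ineq4)
  also have "\<dots> \<le> norm Z * (1/2) + (1/2) * norm Z"
  proof (rule add_mono)
    show "norm (Z ** transpose (th n)) \<le> norm Z * (1/2)"
      using norm_mult_right[of Z "transpose (th n)"] mult_left_mono[OF s1(1) norm_ge_zero[of Z]] by (simp add: sn_transpose)
    show "norm (transpose (th (n + 1)) ** Z) \<le> (1/2) * norm Z"
      using norm_mult_left[of "transpose (th (n + 1))" Z] mult_right_mono[OF s1(2) norm_ge_zero[of Z]] by (simp add: sn_transpose)
  qed
  finally have nd: "norm (Z ** transpose (th n) - transpose (th (n + 1)) ** Z) \<le> norm Z" by simp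
  have gA: "\<forall>k. n + 1 < k \<and> k \<le> (n + 1) + (N - (n + 1)) \<longrightarrow> specnorm (th k) \<le> 1/2" using g n unfolding good_def by auto
  have gB: "\<forall>k. 0 < k \<and> k \<le> 0 + (n - 1) \<longrightarrow> specnorm (th k) \<le> 1/2" using g n unfolding good_def by auto
  let ?r = "1 / (2 * real N)"
  have r0: "0 \<le> ?r" using N by simp
  have "norm Z \<le> (1 + ?r)^(N - (n + 1)) * norm (?W ** transpose ?C)"
    unfolding Z_def Aft_def by (rule seg_bounds(3)[OF N gA])
  also have "norm (?W ** transpose ?C) = norm (?C ** transpose ?W)" by (rule norm_right_T)
  also have "\<dots> \<le> (1 + ?r)^(n - 1) * norm (transpose ?W)"
    unfolding Bef_def by (rule seg_bounds(1)[OF N gB])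
  finally have "norm Z \<le> (1 + ?r)^(N - (n + 1) + (n - 1)) * norm ?W"
    using r0 by (simp add: mult_left_mono power_add mult.assoc norm_transpose)
  also have "\<dots> \<le> exp (1/2) * norm ?W"
    by (rule mult_right_mono[OF pow_upper[OF N]]) (use n in auto)
  finally have nZ: "norm Z \<le> exp (1/2) * norm ?W" .
  have "grad Sig B N th (n + 1) - grad Sig B N th n = (2 / real N) *\<^sub>R (?c *\<^sub>R (Z ** transpose (th n) - transpose (th (n + 1)) ** Z))"
    unfolding g1 g2 diff[symmetric] by (simp add: scaleR_diff_right)
  then have "norm (grad Sig B N th (n + 1) - grad Sig B N th n) = (2 / real N) * (?c * norm (Z ** transpose (th n) - transpose (th (n + 1)) ** Z))"
    by simp
  also have "\<dots> \<le> (2 / real N) * (?c * (exp (1/2) * norm ?W))"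
    using nd nZ by (intro mult_left_mono) auto
  finally show ?thesis by (simp add: mult.assoc)
qed

lemma W_loss:
  fixes Sig B :: "real^'n::finite^'n"
  assumes sym: "transpose Sig = Sig"
    and posdef: "\<forall>x. x \<noteq> 0 \<longrightarrow> x \<bullet> (Sig *v x) > 0"
    and Mmax: "\<forall>lam. is_eigenvalue Sig lam \<longrightarrow> lam \<le> M"
    and mmin: "\<forall>lam. is_eigenvalue Sig lam \<longrightarrow> m \<le> lam"
  shows "(norm (Wm Sig B N th))^2 \<le> M * lossL Sig B N th"
    and "m * lossL Sig B N th \<le> (norm (Wm Sig B N th))^2"
    and "0 \<le> lossL Sig B N th"
proof -
  let ?E = "resprod N th N - B"
  have rowW: "(Wm Sig B N th) $ i = Sig *v (?E $ i)" for i
    unfolding Wm_def row_mult using sym by simp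
  have nW: "(norm (Wm Sig B N th))^2 = (\<Sum>i\<in>UNIV. (norm (Sig *v (?E $ i)))^2)"
    by (simp add: norm_mat_sq_rows rowW)
  have L: "lossL Sig B N th = (\<Sum>i\<in>UNIV. (?E $ i) \<bullet> (Sig *v (?E $ i)))"
    unfolding lossL_quad by (simp add: inner_vec_def[of ?E] rowW[unfolded Wm_def])
  show "(norm (Wm Sig B N th))^2 \<le> M * lossL Sig B N th"
    unfolding nW L sum_distrib_left by (rule sum_mono) (rule sig_bounds(1)[OF sym posdef Mmax mmin])
  show "m * lossL Sig B N th \<le> (norm (Wm Sig B N th))^2"
    unfolding nW L sum_distrib_left by (rule sum_mono) (rule sig_bounds(2)[OF sym posdef Mmax mmin])
  show "0 \<le> lossL Sig B N th"
    unfolding L by (rule sum_nonneg) (metis order.refl less_imp_le inner_zero_left posdef)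
qed

lemma int_bound:
  fixes f :: "real \<Rightarrow> 'a::real_normed_vector"
  assumes ab: "a \<le> b" and beta: "\<beta> > 0"
    and cont: "continuous_on {a..b} f"
    and der: "\<And>x. a < x \<Longrightarrow> x < b \<Longrightarrow> (f has_vector_derivative f' x) (at x)"
    and bnd: "\<And>x. a < x \<Longrightarrow> x < b \<Longrightarrow> norm (f' x) \<le> c * exp (- \<beta> * x)"
  shows "norm (f b - f a) \<le> (c / \<beta>) * (exp (- \<beta> * a) - exp (- \<beta> * b))"
proof (cases "a = b")
  case True then show ?thesis by simp
next
  case False
  then have ab': "a < b" using ab by simp
  define \<phi> where "\<phi> x = - (c / \<beta>) * exp (- \<beta> * x)" for x
  have phid: "(\<phi> has_vector_derivative c * exp (- \<beta> * x)) (at x)" for x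
  proof -
    have "(\<phi> has_real_derivative (- (c / \<beta>)) * (exp (- \<beta> * x) * (- \<beta>))) (at x)"
      unfolding \<phi>_def by (intro derivative_eq_intros) auto
    moreover have "(- (c / \<beta>)) * (exp (- \<beta> * x) * (- \<beta>)) = c * exp (- \<beta> * x)"
      using beta by simp
    ultimately show ?thesis by (simp add: has_real_derivative_iff_has_vector_derivative)
  qed
  have phic: "continuous_on {a..b} \<phi>" unfolding \<phi>_def by (intro continuous_intros)
  have "norm (f b - f a) \<le> \<phi> b - \<phi> a"
    by (rule differentiable_bound_general[OF ab' cont phic der phid bnd])
  also have "\<phi> b - \<phi> a = (c / \<beta>) * (exp (- \<beta> * a) - exp (- \<beta> * b))"
    unfolding \<phi>_def by (simp add: algebra_simps)
  finally show ?thesis .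
qed

lemma within_to_at:
  assumes "(f has_vector_derivative D) (at x within {0..})" "x > (0::real)"
  shows "(f has_vector_derivative D) (at x)"
proof -
  have "(f has_vector_derivative D) (at x within {0<..})"
    by (rule has_vector_derivative_within_subset[OF assms(1)]) auto
  then show ?thesis using assms(2) by (simp add: at_within_open[of x "{0<..}"])
qed

lemma sn_lip: "\<bar>specnorm (X::real^'n::finite^'n) - specnorm Y\<bar> \<le> norm (X - Y)"
proof -
  have "specnorm X \<le> specnorm Y + specnorm (X - Y)" using sn_add[of Y "X - Y"] by simp
  moreover have "specnorm Y \<le> specnorm X + specnorm (Y - X)" using sn_add[of X "Y - X"] by simp
  moreover have "specnorm (Y - X) = specnorm (X - Y)" using sn_scale[of "-1" "X - Y"] by simp
  moreover have "specnorm (X - Y) \<le> norm (X - Y)" by (rule sn_le_norm)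
  ultimately show ?thesis by linarith
qed

lemma sn_cont:
  assumes "continuous_on S (f :: real \<Rightarrow> real^'n::finite^'n)"
  shows "continuous_on S (\<lambda>t. specnorm (f t))"
  unfolding continuous_on_iff
proof (intro ballI allI impI)
  fix x e assume x: "x \<in> S" and e: "(0::real) < e"
  obtain d where d: "d > 0" "\<forall>y\<in>S. dist y x < d \<longrightarrow> dist (f y) (f x) < e"
    using assms x e unfolding continuous_on_iff by blast
  show "\<exists>d>0. \<forall>y\<in>S. dist y x < d \<longrightarrow> dist (specnorm (f y)) (specnorm (f x)) < e"
  proof (intro exI[of _ d] conjI ballI impI)
    show "d > 0" by (rule d(1))
  next
    fix y assume "y \<in> S" "dist y x < d"
    then have "norm (f y - f x) < e" using d by (simp add: dist_norm)
    then show "dist (specnorm (f y)) (specnorm (f x)) < e"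
      using sn_lip[of "f y" "f x"] by (simp add: dist_real_def)
  qed
qed

lemma sqrt_exp: "sqrt (exp x) = exp (x / 2)"
proof -
  have "exp x = (exp (x / 2))^2" by (simp add: power2_eq_square exp_add[symmetric])
  then show ?thesis by simp
qed

locale flowN =
  fixes Sig B :: "real^'n::finite^'n" and M m :: real and N :: nat
    and th :: "nat \<Rightarrow> real \<Rightarrow> real^'n^'n"
  assumes sym: "transpose Sig = Sig"
    and posdef: "\<forall>x. x \<noteq> 0 \<longrightarrow> x \<bullet> (Sig *v x) > 0"
    and Mmax: "\<forall>lam. is_eigenvalue Sig lam \<longrightarrow> lam \<le> M"
    and mmin: "\<forall>lam. is_eigenvalue Sig lam \<longrightarrow> m \<le> lam"
    and Mpos: "M > 0" and mpos: "m > 0" and N1: "N \<ge> 1"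
    and der: "\<And>n t. n \<in> {1..N} \<Longrightarrow> t \<ge> 0 \<Longrightarrow>
       (th n has_vector_derivative (- real N *\<^sub>R grad Sig B N (\<lambda>k. th k t) n)) (at t within {0..})"
    and L0b: "sqrt (lossL Sig B N (\<lambda>k. th k 0)) < m / (4 * sqrt (2 * M * exp 3))"
    and init: "\<And>n. n \<in> {1..N} \<Longrightarrow> specnorm (th n 0) \<le> 1/4"
begin

definition "L t = lossL Sig B N (\<lambda>k. th k t)"
definition "L0 = L 0"
definition "kap = 4 * m / exp 1"
definition "K1 = exp (3/2) * sqrt (M * L0) / m"
definition "c0 = 2 * exp (1/2) * sqrt (M * L0)"

lemma L_nonneg: "0 \<le> L t"
  unfolding L_def by (rule W_loss(3)[OF sym posdef Mmax mmin])

lemma kap_pos: "kap > 0" unfolding kap_def using mpos by simp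

lemma K1_nonneg: "0 \<le> K1"
  unfolding K1_def using mpos Mpos L_nonneg[of 0] unfolding L0_def by simp

lemma K1_small: "K1 < 1/4"
proof -
  have se: "sqrt (2 * M * exp 3) = sqrt 2 * sqrt M * exp (3/2)"
    by (simp add: real_sqrt_mult sqrt_exp)
  have sM: "sqrt M > 0" using Mpos by simp
  have "sqrt L0 < m / (4 * sqrt (2 * M * exp 3))" using L0b unfolding L0_def L_def by simp
  also have "\<dots> \<le> m / (4 * sqrt M * exp (3/2))"
  proof (rule divide_left_mono)
    have p: "0 < 4 * sqrt M * exp (3/2)" using sM by simp
    show "4 * sqrt M * exp (3 / 2) \<le> 4 * sqrt (2 * M * exp 3)"
      unfolding se using p by (simp add: mult_le_cancel_right1 mult.assoc)
    show "0 \<le> m" using mpos by simp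
    show "0 < 4 * sqrt (2 * M * exp 3) * (4 * sqrt M * exp (3 / 2))"
      using p Mpos by (intro mult_pos_pos) auto
  qed
  finally have "sqrt L0 * (4 * sqrt M * exp (3/2)) < m"
    using sM by (simp add: pos_less_divide_eq)
  then have "exp (3/2) * (sqrt M * sqrt L0) < m / 4" by (simp add: algebra_simps)
  then show ?thesis unfolding K1_def using mpos
    by (simp add: real_sqrt_mult pos_divide_less_eq)
qed

lemma K1_eq: "c0 / (kap / 2) = K1"
proof -
  have e3: "exp (1/2) * exp 1 = exp (3/2::real)"
  proof -
    have "exp (1/2) * exp 1 = exp (1/2 + 1::real)" by (rule exp_add[symmetric])
    also have "(1/2 + 1::real) = 3/2" by simp
    finally show ?thesis .
  qed
  have "c0 / (kap / 2) = (exp (1/2) * exp 1) * sqrt (M * L0) / m"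
    unfolding c0_def kap_def using mpos by (simp add: field_simps)
  then show ?thesis unfolding e3 K1_def .
qed

lemma th_cont: "n \<in> {1..N} \<Longrightarrow> continuous_on {0..} (th n)"
  unfolding continuous_on_eq_continuous_within
  using der has_vector_derivative_continuous by fastforce

lemma Lder:
  assumes "t \<ge> 0"
  shows "(L has_real_derivative (- real N * (\<Sum>n\<in>{1..N}. (norm (grad Sig B N (\<lambda>k. th k t) n))^2))) (at t within {0..})"
proof -
  have "(L has_real_derivative (\<Sum>n\<in>{1..N}. grad Sig B N (\<lambda>k. th k t) n \<bullet> (- real N *\<^sub>R grad Sig B N (\<lambda>k. th k t) n))) (at t within {0..})"
    unfolding L_def[abs_def] by (rule loss_deriv[OF sym]) (use der assms in auto)
  moreover have "(\<Sum>n\<in>{1..N}. grad Sig B N (\<lambda>k. th k t) n \<bullet> (- real N *\<^sub>R grad Sig B N (\<lambda>k. th k t) n))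
     = - real N * (\<Sum>n\<in>{1..N}. (norm (grad Sig B N (\<lambda>k. th k t) n))^2)"
    by (simp add: power2_norm_eq_inner sum_distrib_left sum_negf)
  ultimately show ?thesis by simp
qed

lemma PL:
  assumes g: "good N (\<lambda>k. th k t)"
  shows "kap * L t \<le> real N * (\<Sum>n\<in>{1..N}. (norm (grad Sig B N (\<lambda>k. th k t) n))^2)"
proof -
  let ?W = "Wm Sig B N (\<lambda>k. th k t)"
  have each: "(4 / (real N)^2) * (m / exp 1) * L t \<le> (norm (grad Sig B N (\<lambda>k. th k t) n))^2" if n: "n \<in> {1..N}" for n
  proof -
    have lo: "(2 / real N) * exp (-1/2) * norm ?W \<le> norm (grad Sig B N (\<lambda>k. th k t) n)"
      using n by (intro grad_bounds(2)[OF N1 g]) auto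
    have "0 \<le> (2 / real N) * exp (-1/2) * norm ?W" by simp
    then have A0: "((2 / real N) * exp (-1/2) * norm ?W)^2 \<le> (norm (grad Sig B N (\<lambda>k. th k t) n))^2"
      by (rule power_mono[OF lo])
    have ee: "exp (-1/2) * exp (-1/2) = 1 / exp (1::real)"
    proof -
      have "exp (-1/2) * exp (-1/2) = exp (-1/2 + -1/2::real)" by (rule exp_add[symmetric])
      also have "\<dots> = exp (- 1)" by simp
      also have "\<dots> = 1 / exp 1" by (simp add: exp_minus inverse_eq_divide)
      finally show ?thesis .
    qed
    have "((2 / real N) * exp (-1/2) * norm ?W)^2 = (4 / (real N)^2) * (exp (-1/2) * exp (-1/2)) * (norm ?W)^2"
      by (simp add: power_mult_distrib power2_eq_square)
    then have E: "((2 / real N) * exp (-1/2) * norm ?W)^2 = (4 / (real N)^2) * (1 / exp 1) * (norm ?W)^2"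
      unfolding ee .
    have A: "(4 / (real N)^2) * (1 / exp 1) * (norm ?W)^2 \<le> (norm (grad Sig B N (\<lambda>k. th k t) n))^2"
      using A0 unfolding E .
    have B: "m * L t \<le> (norm ?W)^2"
      unfolding L_def by (rule W_loss(2)[OF sym posdef Mmax mmin])
    have C: "0 \<le> (4 / (real N)^2) * (1 / exp 1)" by simp
    have "(4 / (real N)^2) * (m / exp 1) * L t = ((4 / (real N)^2) * (1 / exp 1)) * (m * L t)" by simp
    also have "\<dots> \<le> ((4 / (real N)^2) * (1 / exp 1)) * (norm ?W)^2" by (rule mult_left_mono[OF B C])
    also have "\<dots> \<le> (norm (grad Sig B N (\<lambda>k. th k t) n))^2" by (rule A)
    finally show ?thesis .
  qed
  have "(\<Sum>n\<in>{1..N}. (4 / (real N)^2) * (m / exp 1) * L t) \<le> (\<Sum>n\<in>{1..N}. (norm (grad Sig B N (\<lambda>k. th k t) n))^2)"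
    by (rule sum_mono) (rule each)
  then have "real N * ((4 / (real N)^2) * (m / exp 1) * L t) \<le> (\<Sum>n\<in>{1..N}. (norm (grad Sig B N (\<lambda>k. th k t) n))^2)"
    by simp
  then have "real N * (real N * ((4 / (real N)^2) * (m / exp 1) * L t)) \<le> real N * (\<Sum>n\<in>{1..N}. (norm (grad Sig B N (\<lambda>k. th k t) n))^2)"
    by (rule mult_left_mono) simp
  moreover have "real N * (real N * ((4 / (real N)^2) * (m / exp 1) * L t)) = kap * L t"
  proof -
    have "real N \<noteq> 0" using N1 by simp
    then show ?thesis unfolding kap_def by (simp add: power2_eq_square)
  qed
  ultimately show ?thesis by simp
qed

end

context flowN begin

lemma decay:
  assumes T: "T > 0" and gd: "\<And>s. 0 < s \<Longrightarrow> s < T \<Longrightarrow> good N (\<lambda>k. th k s)"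
    and s: "0 \<le> s" "s \<le> T"
  shows "L s \<le> L0 * exp (- kap * s)"
proof (cases "s = 0")
  case True then show ?thesis unfolding L0_def by simp
next
  case False
  then have s0: "0 < s" using s by simp
  define Ld where "Ld r = - real N * (\<Sum>n\<in>{1..N}. (norm (grad Sig B N (\<lambda>k. th k r) n))^2)" for r
  define h where "h r = L r * exp (kap * r)" for r
  define D where "D r = Ld r * exp (kap * r) + (exp (kap * r) * kap) * L r" for r
  have hd: "(h has_real_derivative D r) (at r within {0..s})" if r: "0 \<le> r" "r \<le> s" for r
  proof -
    have L1: "(L has_real_derivative Ld r) (at r within {0..s})"
      unfolding Ld_def by (rule DERIV_subset[OF Lder[OF r(1)]]) auto
    have E1: "((\<lambda>r. exp (kap * r)) has_real_derivative exp (kap * r) * kap) (at r within {0..s})"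
      by (auto intro!: derivative_eq_intros)
    show ?thesis unfolding h_def D_def by (rule DERIV_mult[OF L1 E1])
  qed
  obtain x where x: "x \<in> {0<..<s}" and eq: "h s - h 0 = (*) (D x) (s - 0)"
    using mvt_simple[OF s0, of h "\<lambda>r. (*) (D r)"] hd unfolding has_field_derivative_def by auto
  have gx: "good N (\<lambda>k. th k x)" using x s by (intro gd) auto
  have "kap * L x \<le> - Ld x" unfolding Ld_def using PL[OF gx] by simp
  then have "D x = exp (kap * x) * (Ld x + kap * L x)" unfolding D_def by (simp add: algebra_simps)
  also have "\<dots> \<le> 0" using \<open>kap * L x \<le> - Ld x\<close> by (simp add: mult_nonneg_nonpos)
  finally have "D x * s \<le> 0" using s0 by (simp add: mult_nonpos_nonneg)
  then have "h s \<le> h 0" using eq by simp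
  then have "L s * exp (kap * s) \<le> L0" unfolding h_def L0_def by simp
  then have le: "L s * exp (kap * s) * exp (- kap * s) \<le> L0 * exp (- kap * s)"
    by (rule mult_right_mono) simp
  have "exp (kap * s) * exp (- kap * s) = 1" by (simp add: exp_minus[symmetric] exp_add[symmetric])
  then have "L s = L s * exp (kap * s) * exp (- kap * s)" by (simp add: mult.assoc)
  from ord_eq_le_trans[OF this le] show ?thesis .
qed

lemma gradnorm:
  assumes g: "good N (\<lambda>k. th k t)" and n: "n \<in> {1..N}"
  shows "norm (real N *\<^sub>R grad Sig B N (\<lambda>k. th k t) n) \<le> 2 * exp (1/2) * sqrt (M * L t)"
proof -
  let ?W = "Wm Sig B N (\<lambda>k. th k t)"
  have "norm ?W \<le> sqrt (M * L t)"
    by (rule real_le_rsqrt) (unfold L_def, rule W_loss(1)[OF sym posdef Mmax mmin])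
  moreover have "norm (grad Sig B N (\<lambda>k. th k t) n) \<le> (2 / real N) * exp (1/2) * norm ?W"
    using n by (intro grad_bounds(1)[OF N1 g]) auto
  ultimately have "norm (grad Sig B N (\<lambda>k. th k t) n) \<le> (2 / real N) * exp (1/2) * sqrt (M * L t)"
    by (smt (verit) mult_left_mono divide_nonneg_nonneg exp_ge_zero mult_nonneg_nonneg of_nat_0_le_iff)
  then have "real N * norm (grad Sig B N (\<lambda>k. th k t) n) \<le> real N * ((2 / real N) * exp (1/2) * sqrt (M * L t))"
    by (rule mult_left_mono) simp
  also have "\<dots> = 2 * exp (1/2) * sqrt (M * L t)" using N1 by simp
  finally show ?thesis by simp
qed

lemma sqrt_decay:
  assumes "L t \<le> L0 * exp (- kap * t)"
  shows "sqrt (M * L t) \<le> sqrt (M * L0) * exp (- (kap / 2) * t)"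
proof -
  have "sqrt (M * L t) \<le> sqrt (M * (L0 * exp (- kap * t)))"
    using assms Mpos by (intro real_sqrt_le_mono mult_left_mono) auto
  also have "\<dots> = sqrt (M * L0) * sqrt (exp (- kap * t))" by (simp add: real_sqrt_mult mult.assoc)
  also have "sqrt (exp (- kap * t)) = exp (- (kap / 2) * t)" unfolding sqrt_exp by simp
  finally show ?thesis .
qed

lemma move:
  assumes T: "T > 0" and gd: "\<And>s. 0 < s \<Longrightarrow> s < T \<Longrightarrow> good N (\<lambda>k. th k s)"
    and n: "n \<in> {1..N}" and ab: "0 \<le> a" "a \<le> b" "b \<le> T"
  shows "norm (th n b - th n a) \<le> K1 * (exp (- (kap/2) * a) - exp (- (kap/2) * b))"
proof -
  have "norm (th n b - th n a) \<le> (c0 / (kap/2)) * (exp (- (kap/2) * a) - exp (- (kap/2) * b))"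
  proof (rule int_bound[OF ab(2)])
    show "kap / 2 > 0" using kap_pos by simp
    show "continuous_on {a..b} (th n)"
      by (rule continuous_on_subset[OF th_cont[OF n]]) (use ab in auto)
    fix x assume x: "a < x" "x < b"
    then have x0: "0 < x" using ab by simp
    show "(th n has_vector_derivative (- real N *\<^sub>R grad Sig B N (\<lambda>k. th k x) n)) (at x)"
      by (rule within_to_at[OF der[OF n] x0]) (use x0 in simp)
    have gx: "good N (\<lambda>k. th k x)" using x ab by (intro gd) auto
    have "norm (- real N *\<^sub>R grad Sig B N (\<lambda>k. th k x) n) = norm (real N *\<^sub>R grad Sig B N (\<lambda>k. th k x) n)"
      by (simp only: scaleR_minus_left norm_minus_cancel)
    also have "\<dots> \<le> 2 * exp (1/2) * sqrt (M * L x)" by (rule gradnorm[OF gx n])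
    also have "\<dots> \<le> 2 * exp (1/2) * (sqrt (M * L0) * exp (- (kap / 2) * x))"
      by (intro mult_left_mono sqrt_decay decay[OF T gd]) (use x ab in auto)
    finally show "norm (- real N *\<^sub>R grad Sig B N (\<lambda>k. th k x) n) \<le> c0 * exp (- (kap / 2) * x)"
      unfolding c0_def by (simp add: mult.assoc)
  qed
  then show ?thesis unfolding K1_eq .
qed

end

context flowN begin

lemma norm_lt_half:
  assumes t: "t \<ge> 0" and n: "n \<in> {1..N}"
  shows "specnorm (th n t) < 1/2"
proof (rule ccontr)
  assume nlt: "\<not> specnorm (th n t) < 1/2"
  define A where "A = (\<Union>n\<in>{1..N}. {t \<in> {0..}. 1/2 \<le> specnorm (th n t)})"
  have cl1: "closed {t \<in> {0..}. 1/2 \<le> specnorm (th k t)}" if k: "k \<in> {1..N}" for k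
    by (rule continuous_on_closed_Collect_le[OF continuous_on_const sn_cont[OF th_cont[OF k]] closed_atLeast])
  have cl: "closed A" unfolding A_def by (intro closed_UN finite_atLeastAtMost ballI cl1)
  have tA: "t \<in> A" unfolding A_def using t n nlt by (intro UN_I[of n]) auto
  then have ne: "A \<noteq> {}" by auto
  have bdd: "bdd_below A" unfolding A_def by (rule bdd_belowI[of _ 0]) auto
  define t1 where "t1 = Inf A"
  have t1A: "t1 \<in> A" unfolding t1_def by (rule closed_contains_Inf[OF ne bdd cl])
  then obtain n1 where n1: "n1 \<in> {1..N}" and t10: "t1 \<ge> 0" and big: "1/2 \<le> specnorm (th n1 t1)"
    unfolding A_def by auto
  have "t1 \<noteq> 0"
  proof
    assume "t1 = 0"
    then have "1/2 \<le> specnorm (th n1 0)" using big by simp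
    with init[OF n1] show False by simp
  qed
  then have t1p: "t1 > 0" using t10 by simp
  have gd: "good N (\<lambda>k. th k s)" if s: "0 < s" "s < t1" for s
    unfolding good_def
  proof
    fix k assume k: "k \<in> {1..N}"
    show "specnorm (th k s) \<le> 1/2"
    proof (rule ccontr)
      assume "\<not> specnorm (th k s) \<le> 1/2"
      then have "s \<in> A" unfolding A_def using k s by (intro UN_I[of k]) auto
      then have "t1 \<le> s" unfolding t1_def by (rule cInf_lower[OF _ bdd])
      with s show False by simp
    qed
  qed
  have "norm (th n1 t1 - th n1 0) \<le> K1 * (exp (- (kap/2) * 0) - exp (- (kap/2) * t1))"
    by (rule move[OF t1p gd n1]) (use t1p in auto)
  also have "\<dots> \<le> K1" using K1_nonneg by (simp add: mult_left_le)
  finally have mv: "norm (th n1 t1 - th n1 0) < 1/4" using K1_small by simp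
  have "specnorm (th n1 t1) \<le> specnorm (th n1 0) + specnorm (th n1 t1 - th n1 0)"
    using sn_add[of "th n1 0" "th n1 t1 - th n1 0"] by simp
  also have "\<dots> \<le> 1/4 + norm (th n1 t1 - th n1 0)"
    using init[OF n1] sn_le_norm[of "th n1 t1 - th n1 0"] by simp
  finally show False using mv big by simp
qed

lemma good_all: "t \<ge> 0 \<Longrightarrow> good N (\<lambda>k. th k t)"
  unfolding good_def using norm_lt_half by (auto intro: less_imp_le)

lemma move_all:
  assumes n: "n \<in> {1..N}" and ab: "0 \<le> a" "a \<le> b"
  shows "norm (th n b - th n a) \<le> K1 * (exp (- (kap/2) * a) - exp (- (kap/2) * b))"
  by (rule move[of "b + 1"]) (use good_all ab n in auto)

lemma move_diff:
  assumes n: "1 \<le> n" "n + 1 \<le> N" and ab: "0 \<le> a" "a \<le> b"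
  shows "norm ((th (n + 1) b - th n b) - (th (n + 1) a - th n a)) \<le> (K1 / real N) * (exp (- (kap/2) * a) - exp (- (kap/2) * b))"
proof -
  have n1: "n \<in> {1..N}" and n2: "n + 1 \<in> {1..N}" using n by auto
  have "norm ((\<lambda>t. th (n + 1) t - th n t) b - (\<lambda>t. th (n + 1) t - th n t) a) \<le> ((c0 / real N) / (kap/2)) * (exp (- (kap/2) * a) - exp (- (kap/2) * b))"
  proof (rule int_bound[OF ab(2)])
    show "kap / 2 > 0" using kap_pos by simp
    show "continuous_on {a..b} (\<lambda>t. th (n + 1) t - th n t)"
      by (intro continuous_intros continuous_on_subset[OF th_cont[OF n2]] continuous_on_subset[OF th_cont[OF n1]]) (use ab in auto)
    fix x assume x: "a < x" "x < b"
    then have x0: "0 < x" using ab by simp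
    let ?g = "\<lambda>k. grad Sig B N (\<lambda>k. th k x) k"
    show "((\<lambda>t. th (n + 1) t - th n t) has_vector_derivative (- real N *\<^sub>R ?g (n + 1) - - real N *\<^sub>R ?g n)) (at x)"
      by (intro has_vector_derivative_diff within_to_at[OF der[OF n2] x0] within_to_at[OF der[OF n1] x0]) (use x0 in auto)
    have gx: "good N (\<lambda>k. th k x)" using x ab by (intro good_all) auto
    have "norm (- real N *\<^sub>R ?g (n + 1) - - real N *\<^sub>R ?g n) = real N * norm (?g (n + 1) - ?g n)"
    proof -
      have "- real N *\<^sub>R ?g (n + 1) - - real N *\<^sub>R ?g n = - (real N *\<^sub>R (?g (n + 1) - ?g n))"
        by (simp add: scaleR_diff_right)
      then show ?thesis by (simp only: norm_minus_cancel) simp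
    qed
    also have "\<dots> \<le> real N * ((2 / real N) * (1 / real N) * exp (1/2) * norm (Wm Sig B N (\<lambda>k. th k x)))"
      by (rule mult_left_mono[OF grad_diff[OF N1 gx n]]) simp
    also have "\<dots> = (2 / real N) * exp (1/2) * norm (Wm Sig B N (\<lambda>k. th k x))" using N1 by simp
    also have "\<dots> \<le> (2 / real N) * exp (1/2) * sqrt (M * L x)"
    proof (rule mult_left_mono)
      show "norm (Wm Sig B N (\<lambda>k. th k x)) \<le> sqrt (M * L x)"
        by (rule real_le_rsqrt) (unfold L_def, rule W_loss(1)[OF sym posdef Mmax mmin])
    qed simp
    also have "\<dots> \<le> (2 / real N) * exp (1/2) * (sqrt (M * L0) * exp (- (kap / 2) * x))"
      by (intro mult_left_mono sqrt_decay decay[of "x + 1"]) (use x ab good_all in auto)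
    finally show "norm (- real N *\<^sub>R ?g (n + 1) - - real N *\<^sub>R ?g n) \<le> (c0 / real N) * exp (- (kap / 2) * x)"
      unfolding c0_def by (simp add: mult_ac)
  qed
  also have "(c0 / real N) / (kap/2) = K1 / real N" 
    using K1_eq by (metis divide_divide_eq_left mult.commute)
  finally show ?thesis by simp
qed

lemma conv:
  assumes n: "n \<in> {1..N}"
  shows "\<exists>Lim. (th n \<longlongrightarrow> Lim) at_top"
proof -
  define c where "c = kap / 2"
  have c: "c > 0" unfolding c_def using kap_pos by simp
  define u where "u j = th n (real j)" for j :: nat
  have geo: "(\<lambda>j. K1 * exp (- c * real j)) \<longlonglongrightarrow> 0"
  proof -
    have "(\<lambda>j. (exp (- c))^j) \<longlonglongrightarrow> 0" by (rule LIMSEQ_power_zero) (use c in simp)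
    moreover have "(\<lambda>j. (exp (- c))^j) = (\<lambda>j. exp (- c * real j))"
      by (rule ext) (simp add: exp_of_nat_mult[symmetric] mult.commute)
    ultimately have "(\<lambda>j. exp (- c * real j)) \<longlonglongrightarrow> 0" by simp
    then show ?thesis using tendsto_mult[OF tendsto_const[of K1]] by fastforce
  qed
  have ub: "norm (u k - u j) \<le> K1 * exp (- c * real j)" if "j \<le> k" for j k
  proof -
    have "norm (u k - u j) \<le> K1 * (exp (- c * real j) - exp (- c * real k))"
      unfolding u_def c_def by (rule move_all[OF n]) (use that in auto)
    also have "\<dots> \<le> K1 * exp (- c * real j)" using K1_nonneg by (simp add: mult_left_mono)
    finally show ?thesis .
  qed
  have "Cauchy u"
  proof (rule CauchyI)
    fix e :: real assume e: "e > 0"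
    from order_tendstoD(2)[OF geo e] obtain M0 where M0: "\<And>j. j \<ge> M0 \<Longrightarrow> K1 * exp (- c * real j) < e"
      unfolding eventually_sequentially by auto
    show "\<exists>M. \<forall>m\<ge>M. \<forall>k\<ge>M. norm (u m - u k) < e"
    proof (intro exI[of _ M0] allI impI)
      fix m k assume mk: "m \<ge> M0" "k \<ge> M0"
      show "norm (u m - u k) < e"
      proof (cases "m \<le> k")
        case True
        have "norm (u m - u k) = norm (u k - u m)" by (rule norm_minus_commute)
        also have "\<dots> \<le> K1 * exp (- c * real m)" by (rule ub[OF True])
        also have "\<dots> < e" by (rule M0[OF mk(1)])
        finally show ?thesis .
      next
        case False
        have "norm (u m - u k) \<le> K1 * exp (- c * real k)" by (rule ub) (use False in simp)
        also have "\<dots> < e" by (rule M0[OF mk(2)])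
        finally show ?thesis .
      qed
    qed
  qed
  then obtain Lim where lim: "u \<longlonglongrightarrow> Lim" using Cauchy_convergent_iff convergent_def by blast
  have bnd: "norm (th n t - Lim) \<le> K1 * exp (- c * t)" if t: "t \<ge> 0" for t
  proof (rule LIMSEQ_le_const2)
    show "(\<lambda>j. norm (th n t - u j)) \<longlonglongrightarrow> norm (th n t - Lim)"
      by (intro tendsto_intros lim)
    show "\<exists>N0. \<forall>j\<ge>N0. norm (th n t - u j) \<le> K1 * exp (- c * t)"
    proof (intro exI[of _ "nat \<lceil>t\<rceil>"] allI impI)
      fix j assume j: "j \<ge> nat \<lceil>t\<rceil>"
      then have tj: "t \<le> real j" by linarith
      have "norm (th n t - u j) = norm (th n (real j) - th n t)" unfolding u_def by (rule norm_minus_commute)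
      also have "\<dots> \<le> K1 * (exp (- c * t) - exp (- c * real j))"
        unfolding c_def by (rule move_all[OF n t tj])
      also have "\<dots> \<le> K1 * exp (- c * t)" using K1_nonneg by (simp add: mult_left_mono)
      finally show "norm (th n t - u j) \<le> K1 * exp (- c * t)" .
    qed
  qed
  have ex0: "((\<lambda>t. exp (- c * t)) \<longlongrightarrow> 0) at_top"
  proof -
    have "LIM t at_top. (- c) * t :> at_bot"
      by (rule filterlim_tendsto_neg_mult_at_bot[OF tendsto_const _ filterlim_ident]) (use c in simp)
    then show ?thesis by (rule filterlim_compose[OF exp_at_bot])
  qed
  have "((\<lambda>t. th n t - Lim) \<longlongrightarrow> 0) at_top"
  proof (rule Lim_null_comparison)
    show "\<forall>\<^sub>F t in at_top. norm (th n t - Lim) \<le> K1 * exp (- c * t)"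
      using eventually_ge_at_top[of 0] by eventually_elim (rule bnd)
    show "((\<lambda>t. K1 * exp (- c * t)) \<longlongrightarrow> 0) at_top"
      using tendsto_mult[OF tendsto_const[of K1] ex0] by simp
  qed
  then have "(th n \<longlongrightarrow> Lim) at_top" by (rule LIM_zero_cancel)
  then show ?thesis by blast
qed

lemma smooth:
  assumes n: "1 \<le> n" "n + 1 \<le> N" and t: "t \<ge> 0"
  shows "specnorm (th (n + 1) t - th n t) \<le> specnorm (th (n + 1) 0 - th n 0) + (1/4) / real N"
proof -
  let ?D = "\<lambda>t. th (n + 1) t - th n t"
  have "specnorm (?D t) \<le> specnorm (?D 0) + specnorm (?D t - ?D 0)"
    using sn_add[of "?D 0" "?D t - ?D 0"] by simp
  also have "specnorm (?D t - ?D 0) \<le> norm (?D t - ?D 0)" by (rule sn_le_norm)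
  also have "\<dots> \<le> (K1 / real N) * (exp (- (kap/2) * 0) - exp (- (kap/2) * t))"
    by (rule move_diff[OF n]) (use t in auto)
  also have "\<dots> \<le> K1 / real N" by (rule mult_left_le) (use K1_nonneg in auto)
  also have "\<dots> \<le> (1/4) / real N" using K1_small by (intro divide_right_mono) auto
  finally show ?thesis by simp
qed

end

lemma inner_fun_eq:
  fixes g g' :: "real^'n::finite^'n"
  assumes "(\<lambda>h. g \<bullet> h) = (\<lambda>h. g' \<bullet> h)"
  shows "g = g'"
proof -
  have "g \<bullet> (g - g') = g' \<bullet> (g - g')" using fun_cong[OF assms, of "g - g'"] by simp
  then have "(g - g') \<bullet> (g - g') = 0" by (simp add: inner_diff_left)
  then show ?thesis by simp
qed

theorem proposition2:
  fixes Sig B :: "real^'d::finite^'d" and M m :: real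
    and \<theta> :: "nat \<Rightarrow> nat \<Rightarrow> real \<Rightarrow> real^'d^'d"
  assumes sym: "transpose Sig = Sig"
    and posdef: "\<forall>x. x \<noteq> 0 \<longrightarrow> x \<bullet> (Sig *v x) > 0"
    and M_eig: "is_eigenvalue Sig M" and M_max: "\<forall>lam. is_eigenvalue Sig lam \<longrightarrow> lam \<le> M"
    and m_eig: "is_eigenvalue Sig m" and m_min: "\<forall>lam. is_eigenvalue Sig lam \<longrightarrow> m \<le> lam"
    and M_pos: "M > 0" and m_pos: "m > 0"
    and flow: "\<forall>N\<ge>1. \<forall>n\<in>{1..N}. \<forall>t\<ge>0. \<exists>g.
        is_gradient (\<lambda>X. lossL Sig B N ((\<lambda>k. \<theta> N k t)(n := X))) (\<theta> N n t) g \<and>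
        (\<theta> N n has_vector_derivative (- real N *\<^sub>R g)) (at t within {0..})"
    and init_loss: "\<forall>N\<ge>1. sqrt (lossL Sig B N (\<lambda>k. \<theta> N k 0)) < m / (4 * sqrt (2 * M * exp 3))"
    and init_norm: "\<forall>N\<ge>1. \<forall>n\<in>{1..N}. specnorm (\<theta> N n 0) \<le> 1/4"
    and init_smooth: "\<exists>C0>0. \<forall>N\<ge>1. \<forall>n\<in>{1..N-1}.
        specnorm (\<theta> N (n+1) 0 - \<theta> N n 0) \<le> C0 / real N"
  shows "(\<forall>N\<ge>1. \<forall>n\<in>{1..N}. \<forall>t\<ge>0. specnorm (\<theta> N n t) < 1/2)
    \<and> (\<forall>N\<ge>1. \<forall>n\<in>{1..N}. \<exists>L. (\<theta> N n \<longlongrightarrow> L) at_top)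
    \<and> (\<exists>C>0. \<forall>N\<ge>1. \<forall>n\<in>{1..N-1}. \<forall>t\<ge>0.
        specnorm (\<theta> N (n+1) t - \<theta> N n t) \<le> C / real N)"
proof -
  have inst: "flowN Sig B M m N (\<theta> N)" if N: "N \<ge> 1" for N
  proof
    show "transpose Sig = Sig" by (rule sym)
    show "\<forall>x. x \<noteq> 0 \<longrightarrow> x \<bullet> (Sig *v x) > 0" by (rule posdef)
    show "\<forall>lam. is_eigenvalue Sig lam \<longrightarrow> lam \<le> M" by (rule M_max)
    show "\<forall>lam. is_eigenvalue Sig lam \<longrightarrow> m \<le> lam" by (rule m_min)
    show "M > 0" by (rule M_pos)
    show "m > 0" by (rule m_pos)
    show "N \<ge> 1" by (rule N)
    show "sqrt (lossL Sig B N (\<lambda>k. \<theta> N k 0)) < m / (4 * sqrt (2 * M * exp 3))"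
      using init_loss N by blast
    show "specnorm (\<theta> N n 0) \<le> 1/4" if "n \<in> {1..N}" for n
      using init_norm N that by blast
    fix n and t :: real assume n: "n \<in> {1..N}" and t: "t \<ge> 0"
    obtain g where g: "is_gradient (\<lambda>X. lossL Sig B N ((\<lambda>k. \<theta> N k t)(n := X))) (\<theta> N n t) g"
      and gd: "(\<theta> N n has_vector_derivative (- real N *\<^sub>R g)) (at t within {0..})"
      using flow N n t by blast
    have g2: "is_gradient (\<lambda>X. lossL Sig B N ((\<lambda>k. \<theta> N k t)(n := X))) (\<theta> N n t) (grad Sig B N (\<lambda>k. \<theta> N k t) n)"
      using gradient_formula[OF sym, where th = "\<lambda>k. \<theta> N k t" and n = n and N = N and B = B] n by simp
    have "g = grad Sig B N (\<lambda>k. \<theta> N k t) n"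
      by (rule inner_fun_eq, rule has_derivative_unique) (use g g2 in \<open>auto simp: is_gradient_def\<close>)
    with gd show "(\<theta> N n has_vector_derivative (- real N *\<^sub>R grad Sig B N (\<lambda>k. \<theta> N k t) n)) (at t within {0..})"
      by simp
  qed
  obtain C0 where C0: "C0 > 0" and C0b: "\<forall>N\<ge>1. \<forall>n\<in>{1..N-1}. specnorm (\<theta> N (n+1) 0 - \<theta> N n 0) \<le> C0 / real N"
    using init_smooth by blast
  have P1: "\<forall>N\<ge>1. \<forall>n\<in>{1..N}. \<forall>t\<ge>0. specnorm (\<theta> N n t) < 1/2"
    using flowN.norm_lt_half[OF inst] by blast
  have P2: "\<forall>N\<ge>1. \<forall>n\<in>{1..N}. \<exists>L. (\<theta> N n \<longlongrightarrow> L) at_top"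
    using flowN.conv[OF inst] by blast
  have P3: "\<forall>N\<ge>1. \<forall>n\<in>{1..N-1}. \<forall>t\<ge>0. specnorm (\<theta> N (n+1) t - \<theta> N n t) \<le> (C0 + 1/4) / real N"
  proof (intro allI impI ballI)
    fix N n t assume N: "N \<ge> (1::nat)" and n: "n \<in> {1..N-1}" and t: "(t::real) \<ge> 0"
    have n': "1 \<le> n" "n + 1 \<le> N" using n N by auto
    have "specnorm (\<theta> N (n+1) t - \<theta> N n t) \<le> specnorm (\<theta> N (n+1) 0 - \<theta> N n 0) + (1/4) / real N"
      by (rule flowN.smooth[OF inst[OF N] n' t])
    also have "\<dots> \<le> C0 / real N + (1/4) / real N" using C0b N n by auto
    also have "\<dots> = (C0 + 1/4) / real N" by (simp add: add_divide_distrib)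
    finally show "specnorm (\<theta> N (n+1) t - \<theta> N n t) \<le> (C0 + 1/4) / real N" .
  qed
  have "C0 + 1/4 > 0" using C0 by simp
  with P1 P2 P3 show ?thesis by blast
qed

end
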